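(* In the setting described in the context, let $\sigma_w,\sigma_v$ be real scalars and let $\Pi_\tau(s)=W^{1/2}\tilde\Sigma_\tau(s)$, where $$\tilde\Sigma_\tau(s)=R^T\big(sI+L_{e,s}^\tau RWR^T\big)^{-1}\begin{bmatrix}\sigma_wD_\tau^TE^{-1/2} & -\sigma_vL_{e,s}^\tau RW^{1/2}\end{bmatrix}.$$ Then $$\|\Pi_\tau\|_\infty^2=\sigma_w^2\,\bar\sigma(X)+\sigma_v^2,\qquad X=W^{1/2}R^T\big(RWR^TL_{e,s}^\tau RWR^T\big)^{-1}RW^{1/2}.$$
   Context: Let $\mathcal G$ be an undirected, connected graph without self-loops, with node set $\{1,\dots,n\}$ ($n\ge2$) and edge set $\mathcal E$, $m=|\mathcal E|$. Give each edge an arbitrary orientation; the incidence matrix $D\in\mathbb R^{n\times m}$ has $D_{il}=1$ if node $i$ is the initial node of edge $l$, $-1$ if it is the terminal node, and $0$ otherwise. Fix a spanning tree $\mathcal G_\tau$ and order the edges so the first $n-1$ are tree edges; write $D=[D_\tau\ D_c]$ with $D_\tau\in\mathbb R^{n\times(n-1)}$. Set $T_\tau^c=(D_\tau^TD_\tau)^{-1}D_\tau^TD_c$ and $R=[I_{n-1}\ T_\tau^c]\in\mathbb R^{(n-1)\times m}$. Let $W=\mathrm{diag}(w_1,\dots,w_m)$, $w_l>0$, and $E=\mathrm{diag}(\epsilon_1,\dots,\epsilon_n)$, $\epsilon_i>0$; powers of these diagonal matrices are taken entrywise. Define $L_{e,s}^\tau=D_\tau^TE^{-1}D_\tau$. For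 a stable transfer matrix $\Phi(s)$, $\|\Phi\|_\infty=\sup_{\omega\in\mathbb R}\bar\sigma(\Phi(j\omega))$ where $\bar\sigma$ is the largest singular value. *)

theory Defs
  imports "HOL-Analysis.Analysis" "Jordan_Normal_Form.Gauss_Jordan_Elimination"
    "Jordan_Normal_Form.Schur_Decomposition" "Jordan_Normal_Form.Char_Poly"
begin

(* Nodes are 0..n-1 (0-indexed); an oriented edge l is the pair es!l = (initial, terminal). *)

definition adj_rel :: "(nat \<times> nat) list \<Rightarrow> nat \<Rightarrow> nat \<Rightarrow> bool" where
  "adj_rel F x y \<longleftrightarrow> (\<exists>(a,b)\<in>set F. (x = a \<and> y = b) \<or> (x = b \<and> y = a))"

definition simple_graph_edges :: "nat \<Rightarrow> (nat \<times> nat) list \<Rightarrow> bool" where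
  "simple_graph_edges n es \<longleftrightarrow> (\<forall>(a,b)\<in>set es. a < n \<and> b < n \<and> a \<noteq> b)
      \<and> distinct (map (\<lambda>(a,b). {a,b}) es)"

definition connected_on :: "nat \<Rightarrow> (nat \<times> nat) list \<Rightarrow> bool" where
  "connected_on n F \<longleftrightarrow> (\<forall>i<n. \<forall>j<n. (adj_rel F)\<^sup>*\<^sup>* i j)"

definition acyclic_edges :: "(nat \<times> nat) list \<Rightarrow> bool" where
  "acyclic_edges F \<longleftrightarrow> (\<forall>l<length F. \<not> (adj_rel (take l F @ drop (Suc l) F))\<^sup>*\<^sup>* (fst (F!l)) (snd (F!l)))"

definition first_edges_spanning_tree :: "nat \<Rightarrow> (nat \<times> nat) list \<Rightarrow> bool" where
  "first_edges_spanning_tree n es \<longleftrightarrow> n - 1 \<le> length es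
      \<and> connected_on n (take (n - 1) es) \<and> acyclic_edges (take (n - 1) es)"

definition incidence :: "nat \<Rightarrow> (nat \<times> nat) list \<Rightarrow> real mat" where
  "incidence n es = mat n (length es) (\<lambda>(i,l).
      if i = fst (es!l) then 1 else if i = snd (es!l) then -1 else 0)"

definition D_tau :: "nat \<Rightarrow> (nat \<times> nat) list \<Rightarrow> real mat" where
  "D_tau n es = mat n (n - 1) (\<lambda>(i,l). incidence n es $$ (i,l))"

definition D_c :: "nat \<Rightarrow> (nat \<times> nat) list \<Rightarrow> real mat" where
  "D_c n es = mat n (length es - (n - 1)) (\<lambda>(i,l). incidence n es $$ (i, l + (n - 1)))"

definition minv :: "'a::field mat \<Rightarrow> 'a mat" where
  "minv A = the (mat_inverse A)"

definition T_tau_c :: "nat \<Rightarrow> (nat \<times> nat) list \<Rightarrow> real mat" where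
  "T_tau_c n es = minv (transpose_mat (D_tau n es) * D_tau n es) * transpose_mat (D_tau n es) * D_c n es"

(* R = [I_{n-1}  T_tau_c] *)
definition Rmat :: "nat \<Rightarrow> (nat \<times> nat) list \<Rightarrow> real mat" where
  "Rmat n es = mat (n - 1) (length es) (\<lambda>(i,l).
      if l < n - 1 then (if i = l then 1 else 0) else T_tau_c n es $$ (i, l - (n - 1)))"

abbreviation dg :: "nat \<Rightarrow> (nat \<Rightarrow> real) \<Rightarrow> real mat" where
  "dg k d \<equiv> mat_diag k d"

definition L_es :: "nat \<Rightarrow> (nat \<times> nat) list \<Rightarrow> (nat \<Rightarrow> real) \<Rightarrow> real mat" where
  "L_es n es eps = transpose_mat (D_tau n es) * dg n (\<lambda>i. 1 / eps i) * D_tau n es"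

definition cmat :: "real mat \<Rightarrow> complex mat" where
  "cmat A = map_mat complex_of_real A"

definition B_blk :: "nat \<Rightarrow> (nat \<times> nat) list \<Rightarrow> (nat \<Rightarrow> real) \<Rightarrow> (nat \<Rightarrow> real) \<Rightarrow> real \<Rightarrow> real \<Rightarrow> real mat" where
  "B_blk n es w eps sw sv =
     (let M1 = sw \<cdot>\<^sub>m (transpose_mat (D_tau n es) * dg n (\<lambda>i. 1 / sqrt (eps i)));
          M2 = (- sv) \<cdot>\<^sub>m (L_es n es eps * Rmat n es * dg (length es) (\<lambda>l. sqrt (w l)))
      in mat (n - 1) (n + length es) (\<lambda>(i,j). if j < n then M1 $$ (i,j) else M2 $$ (i, j - n)))"

definition Sigma_tau :: "nat \<Rightarrow> (nat \<times> nat) list \<Rightarrow> (nat \<Rightarrow> real) \<Rightarrow> (nat \<Rightarrow> real) \<Rightarrow> real \<Rightarrow> real \<Rightarrow> complex \<Rightarrow> complex mat" where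
  "Sigma_tau n es w eps sw sv s =
     cmat (transpose_mat (Rmat n es)) *
     minv (s \<cdot>\<^sub>m 1\<^sub>m (n - 1) + cmat (L_es n es eps * Rmat n es * dg (length es) w * transpose_mat (Rmat n es))) *
     cmat (B_blk n es w eps sw sv)"

definition Pi_tau :: "nat \<Rightarrow> (nat \<times> nat) list \<Rightarrow> (nat \<Rightarrow> real) \<Rightarrow> (nat \<Rightarrow> real) \<Rightarrow> real \<Rightarrow> real \<Rightarrow> complex \<Rightarrow> complex mat" where
  "Pi_tau n es w eps sw sv s = cmat (dg (length es) (\<lambda>l. sqrt (w l))) * Sigma_tau n es w eps sw sv s"

definition sigma_max :: "complex mat \<Rightarrow> real" where
  "sigma_max A = Max {sqrt (Re k) | k. eigenvalue (mat_adjoint A * A) k}"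

definition hinf_norm :: "(complex \<Rightarrow> complex mat) \<Rightarrow> real" where
  "hinf_norm Phi = (SUP \<omega>::real. sigma_max (Phi (\<i> * complex_of_real \<omega>)))"

definition X_mat :: "nat \<Rightarrow> (nat \<times> nat) list \<Rightarrow> (nat \<Rightarrow> real) \<Rightarrow> (nat \<Rightarrow> real) \<Rightarrow> real mat" where
  "X_mat n es w eps =
     (let R = Rmat n es; Wh = dg (length es) (\<lambda>l. sqrt (w l)); W = dg (length es) w in
      Wh * transpose_mat R * minv (R * W * transpose_mat R * L_es n es eps * R * W * transpose_mat R) * R * Wh)"

end

theory Submission
  imports Defs "Jordan_Normal_Form.Spectral_Radius"
begin


type_synonym cm = "complex mat"
type_synonym cv = "complex vec"

abbreviation adj :: "complex mat \<Rightarrow> complex mat" where "adj A \<equiv> mat_adjoint A"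

lemma adj_dim[simp]: "dim_row (adj A) = dim_col A" "dim_col (adj A) = dim_row A"
  unfolding mat_adjoint_def by (auto simp: mat_of_rows_def)

lemma adj_carrier[simp,intro]: "A \<in> carrier_mat r c \<Longrightarrow> adj A \<in> carrier_mat c r"
  by (metis adj_dim carrier_matD(1) carrier_matD(2) carrier_matI)

lemma adj_index[simp]: "i < dim_col A \<Longrightarrow> j < dim_row A \<Longrightarrow> adj A $$ (i,j) = cnj (A $$ (j,i))"
  unfolding mat_adjoint_def by (auto simp: mat_of_rows_def)

lemma adj_adj[simp]: "adj (adj A) = A"
  by (rule eq_matI, auto)

lemma adj_mult: assumes "A \<in> carrier_mat r k" "B \<in> carrier_mat k c"
  shows "adj (A * B) = adj B * adj A"
proof (rule eq_matI)
  fix i j assume "i < dim_row (adj B * adj A)" "j < dim_col (adj B * adj A)"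
  with assms show "adj (A * B) $$ (i, j) = (adj B * adj A) $$ (i, j)"
    by (auto simp: scalar_prod_def intro!: sum.cong)
qed (use assms in auto)

lemma adj_add: assumes "A \<in> carrier_mat r c" "B \<in> carrier_mat r c"
  shows "adj (A + B) = adj A + adj B"
  by (rule eq_matI, use assms in auto)

lemma adj_smult: "adj (a \<cdot>\<^sub>m A) = cnj a \<cdot>\<^sub>m adj A"
  by (rule eq_matI, auto)

lemma adj_one[simp]: "adj (1\<^sub>m n) = 1\<^sub>m n"
  by (rule eq_matI, auto)

lemma cscalar_adj: assumes A: "A \<in> carrier_mat r c" and x: "x \<in> carrier_vec c" and y: "y \<in> carrier_vec r"
  shows "(A *\<^sub>v x) \<bullet>c y = x \<bullet>c (adj A *\<^sub>v y)"
proof -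
  have "(A *\<^sub>v x) \<bullet>c y = (\<Sum>i<r. (\<Sum>j<c. A $$ (i,j) * vec_index x j) * cnj (vec_index y i))"
    using A x y by (auto simp: scalar_prod_def mult_mat_vec_def lessThan_atLeast0)
  also have "\<dots> = (\<Sum>j<c. \<Sum>i<r. A $$ (i,j) * vec_index x j * cnj (vec_index y i))"
    by (simp add: sum_distrib_right sum.swap[of _ "{..<c}"])
  also have "\<dots> = (\<Sum>j<c. vec_index x j * cnj (\<Sum>i<r. cnj (A $$ (i,j)) * vec_index y i))"
    by (simp add: sum_distrib_left mult_ac)
  also have "\<dots> = x \<bullet>c (adj A *\<^sub>v y)"
    using A x y by (auto simp: scalar_prod_def mult_mat_vec_def lessThan_atLeast0 intro!: sum.cong)
  finally show ?thesis .
qed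

lemma cmat_carrier[simp]: "A \<in> carrier_mat r c \<Longrightarrow> cmat A \<in> carrier_mat r c"
  unfolding cmat_def by auto
lemma cmat_dim[simp]: "dim_row (cmat A) = dim_row A" "dim_col (cmat A) = dim_col A"
  unfolding cmat_def by auto
lemma cmat_index[simp]: "i < dim_row A \<Longrightarrow> j < dim_col A \<Longrightarrow> cmat A $$ (i,j) = complex_of_real (A $$ (i,j))"
  unfolding cmat_def by auto

lemma adj_cmat: "adj (cmat A) = cmat (transpose_mat A)"
  by (rule eq_matI, auto)

lemma cmat_mult: assumes "A \<in> carrier_mat r k" "B \<in> carrier_mat k c"
  shows "cmat (A * B) = cmat A * cmat B"
  unfolding cmat_def using of_real_hom.mat_hom_mult[OF assms] .

lemma cmat_add: assumes "A \<in> carrier_mat r c" "B \<in> carrier_mat r c"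
  shows "cmat (A + B) = cmat A + cmat B"
  by (rule eq_matI, use assms in auto)

lemma cmat_smult: "cmat (a \<cdot>\<^sub>m A) = of_real a \<cdot>\<^sub>m cmat A"
  by (rule eq_matI, auto)



lemma cpos_real: "(z::complex) > 0 \<Longrightarrow> z = of_real (Re z) \<and> Re z > 0"
  by (auto simp: less_complex_def complex_eq_iff)
lemma cnonneg_real: "(z::complex) \<ge> 0 \<Longrightarrow> z = of_real (Re z) \<and> Re z \<ge> 0"
  by (auto simp: less_eq_complex_def complex_eq_iff)

lemma eig_AHA:
  assumes A: "A \<in> carrier_mat r c" and ev: "eigenvector (adj A * A) v k"
  shows "k * (v \<bullet>c v) = (A *\<^sub>v v) \<bullet>c (A *\<^sub>v v)" "v \<in> carrier_vec c" "v \<noteq> 0\<^sub>v c"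
    "k = of_real (Re k)" "Re k \<ge> 0"
proof -
  from ev A have v: "v \<in> carrier_vec c" and v0: "v \<noteq> 0\<^sub>v c" and eq: "(adj A * A) *\<^sub>v v = k \<cdot>\<^sub>v v"
    unfolding eigenvector_def by auto
  have "k * (v \<bullet>c v) = (k \<cdot>\<^sub>v v) \<bullet>c v" using v by simp
  also have "\<dots> = (adj A *\<^sub>v (A *\<^sub>v v)) \<bullet>c v"
    using eq[symmetric] assoc_mult_mat_vec[of "adj A" c r A c v] A v by auto
  also have "\<dots> = (A *\<^sub>v v) \<bullet>c (A *\<^sub>v v)"
    using cscalar_adj[of "adj A" c r "A *\<^sub>v v" v] A v by auto
  finally show k: "k * (v \<bullet>c v) = (A *\<^sub>v v) \<bullet>c (A *\<^sub>v v)" .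
  show "v \<in> carrier_vec c" "v \<noteq> 0\<^sub>v c" using v v0 by auto
  have Q: "v \<bullet>c v > 0" using v v0 by simp
  have P: "(A *\<^sub>v v) \<bullet>c (A *\<^sub>v v) \<ge> 0" by auto
  from cpos_real[OF Q] cnonneg_real[OF P] k
  obtain q p where qp: "v \<bullet>c v = of_real q" "q > 0" "(A *\<^sub>v v) \<bullet>c (A *\<^sub>v v) = of_real p" "p \<ge> 0"
    by metis
  with k have "k = of_real (p / q)" by (simp add: field_simps)
  then show "k = of_real (Re k)" "Re k \<ge> 0" using qp by auto
qed

definition SMset :: "complex mat \<Rightarrow> real set" where
  "SMset A = (\<lambda>k. sqrt (Re k)) ` spectrum (adj A * A)"

lemma sigma_max_SM: "sigma_max A = Max (SMset A)"
proof -
  have "{sqrt (Re k) |k. eigenvalue (adj A * A) k} = (\<lambda>k. sqrt (Re k)) ` spectrum (adj A * A)"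
    unfolding spectrum_def by blast
  then show ?thesis unfolding sigma_max_def SMset_def by simp
qed

lemma SM_props: assumes A: "A \<in> carrier_mat r c" and c: "c > 0"
  shows "finite (SMset A)" "SMset A \<noteq> {}"
proof -
  have C: "adj A * A \<in> carrier_mat c c" using A by auto
  show "finite (SMset A)" unfolding SMset_def using card_finite_spectrum(1)[OF C] by auto
  show "SMset A \<noteq> {}" unfolding SMset_def using spectrum_non_empty[OF C c] by auto
qed

lemma sm_ge: assumes A: "A \<in> carrier_mat r c" and c: "c > 0" and ev: "eigenvalue (adj A * A) k"
  shows "sqrt (Re k) \<le> sigma_max A"
  unfolding sigma_max_SM using SM_props[OF A c] ev
  by (intro Max_ge) (auto simp: SMset_def spectrum_def)

lemma sm_attain: assumes A: "A \<in> carrier_mat r c" and c: "c > 0"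
  shows "\<exists>k v. eigenvector (adj A * A) v k \<and> sigma_max A = sqrt (Re k)"
proof -
  have "sigma_max A \<in> SMset A" unfolding sigma_max_SM using SM_props[OF A c] by (intro Max_in)
  then show ?thesis unfolding SMset_def spectrum_def eigenvalue_def by auto
qed

lemma sm_nonneg: assumes A: "A \<in> carrier_mat r c" and c: "c > 0"
  shows "sigma_max A \<ge> 0"
  using sm_attain[OF A c] eig_AHA(5)[OF A] by (metis real_sqrt_ge_zero)

lemma sm_le: assumes A: "A \<in> carrier_mat r c" and c: "c > 0"
  and bnd: "\<And>k v. eigenvector (adj A * A) v k \<Longrightarrow> Re k \<le> C"
  shows "sigma_max A \<le> sqrt C"
  using sm_attain[OF A c] bnd by auto



lemma mv_assoc: "dim_col (A::complex mat) = dim_row B \<Longrightarrow> dim_vec v = dim_col B \<Longrightarrow> (A * B) *\<^sub>v v = A *\<^sub>v (B *\<^sub>v v)"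
  by (intro assoc_mult_mat_vec carrier_matI carrier_vecI) auto

lemma mv_add: "dim_row (A::complex mat) = dim_row B \<Longrightarrow> dim_col A = dim_col B \<Longrightarrow> dim_vec v = dim_col A \<Longrightarrow>
   (A + B) *\<^sub>v v = A *\<^sub>v v + B *\<^sub>v v"
proof -
  assume a: "dim_row A = dim_row B" "dim_col A = dim_col B" "dim_vec v = dim_col A"
  have "A \<in> carrier_mat (dim_row A) (dim_col A)" "B \<in> carrier_mat (dim_row A) (dim_col A)" "v \<in> carrier_vec (dim_col A)"
    using a by (auto intro!: carrier_matI carrier_vecI)
  then show ?thesis by (rule add_mult_distrib_mat_vec)
qed

lemma mv_smat: "dim_vec v = dim_col A \<Longrightarrow> ((a::complex) \<cdot>\<^sub>m A) *\<^sub>v v = a \<cdot>\<^sub>v (A *\<^sub>v v)"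
  by (rule eq_vecI) (auto simp: scalar_prod_def sum_distrib_left mult.assoc)

lemma mv_one: "dim_vec (v::complex vec) = n \<Longrightarrow> 1\<^sub>m n *\<^sub>v v = v"
  by (intro one_mult_mat_vec carrier_vecI)

lemma mv_svec: "dim_vec v = dim_col (A::complex mat) \<Longrightarrow> A *\<^sub>v ((k::complex) \<cdot>\<^sub>v v) = k \<cdot>\<^sub>v (A *\<^sub>v v)"
  by (intro mult_mat_vec carrier_matI carrier_vecI) auto

lemma mv_vadd: "dim_vec v = dim_col (A::complex mat) \<Longrightarrow> dim_vec w = dim_col A \<Longrightarrow> A *\<^sub>v (v + w) = A *\<^sub>v v + A *\<^sub>v w"
proof -
  assume a: "dim_vec v = dim_col A" "dim_vec w = dim_col A"
  have "A \<in> carrier_mat (dim_row A) (dim_col A)" "v \<in> carrier_vec (dim_col A)" "w \<in> carrier_vec (dim_col A)"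
    using a by (auto intro!: carrier_matI carrier_vecI)
  then show ?thesis by (rule mult_add_distrib_mat_vec)
qed

lemma mv_vminus: "dim_vec v = dim_col (A::complex mat) \<Longrightarrow> dim_vec w = dim_col A \<Longrightarrow> A *\<^sub>v (v - w) = A *\<^sub>v v - A *\<^sub>v w"
proof -
  assume a: "dim_vec v = dim_col A" "dim_vec w = dim_col A"
  have "A \<in> carrier_mat (dim_row A) (dim_col A)" "v \<in> carrier_vec (dim_col A)" "w \<in> carrier_vec (dim_col A)"
    using a by (auto intro!: carrier_matI carrier_vecI)
  then show ?thesis by (rule mult_minus_distrib_mat_vec)
qed

lemma mv_zero: "dim_vec v = dim_col (A::complex mat) \<Longrightarrow> v = 0\<^sub>v (dim_col A) \<Longrightarrow> A *\<^sub>v v = 0\<^sub>v (dim_row A)"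
  by (rule eq_vecI) (auto simp: scalar_prod_def)

lemma cs_smult_left: "dim_vec x = dim_vec y \<Longrightarrow> (a \<cdot>\<^sub>v x) \<bullet>c y = a * (x \<bullet>c y)"
  by (simp add: scalar_prod_def sum_distrib_left mult.assoc)

lemma cs_smult_right: "dim_vec x = dim_vec y \<Longrightarrow> x \<bullet>c ((a::complex) \<cdot>\<^sub>v y) = cnj a * (x \<bullet>c y)"
  by (simp add: scalar_prod_def sum_distrib_left mult_ac)

lemma cs_swap: "dim_vec x = dim_vec y \<Longrightarrow> (x::complex vec) \<bullet>c y = cnj (y \<bullet>c x)"
  by (simp add: scalar_prod_def mult_ac)

lemma cs_zero_left: "dim_vec y = n \<Longrightarrow> 0\<^sub>v n \<bullet>c y = (0::complex)"
  by (simp add: scalar_prod_def)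

lemma cpos_div: assumes "(P::complex) > 0" "Q > 0" "P = r * Q" shows "r > 0"
proof -
  from cpos_real[OF assms(1)] cpos_real[OF assms(2)] obtain a b where
    ab: "P = of_real a" "a > 0" "Q = of_real b" "b > 0" by metis
  then have "r = of_real (a / b)" using assms(3) by (simp add: field_simps)
  then show ?thesis using ab by (simp add: less_complex_def)
qed

lemma inv_ker: assumes A: "(A::complex mat) \<in> carrier_mat n n"
  and ker: "\<And>x. x \<in> carrier_vec n \<Longrightarrow> A *\<^sub>v x = 0\<^sub>v n \<Longrightarrow> x = 0\<^sub>v n"
  shows "minv A \<in> carrier_mat n n" "A * minv A = 1\<^sub>m n" "minv A * A = 1\<^sub>m n"
proof -
  have d: "det A \<noteq> 0" using det_0_iff_vec_prod_zero[OF A] ker by auto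
  have U: "A \<in> Units (ring_mat TYPE(complex) n ())" by (rule det_non_zero_imp_unit[OF A d])
  have "mat_inverse A \<noteq> None" using mat_inverse(1)[OF A, where b="()"] U by auto
  then obtain Bi where Bi: "mat_inverse A = Some Bi" by auto
  from mat_inverse(2)[OF A Bi] have "A * Bi = 1\<^sub>m n \<and> Bi * A = 1\<^sub>m n \<and> Bi \<in> carrier_mat n n" .
  moreover have "minv A = Bi" unfolding minv_def Bi by simp
  ultimately show "minv A \<in> carrier_mat n n" "A * minv A = 1\<^sub>m n" "minv A * A = 1\<^sub>m n" by auto
qed



locale absys =
  fixes p m q :: nat and L M V B :: "complex mat" and sw sv :: real
  assumes p: "p > 0" and mpos: "m > 0" and q: "q > 0"
  and L: "L \<in> carrier_mat p p" and M: "M \<in> carrier_mat p p"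
  and V: "V \<in> carrier_mat p m" and B: "B \<in> carrier_mat p q"
  and LH: "adj L = L" and MH: "adj M = M"
  and Lpd: "\<And>x. x \<in> carrier_vec p \<Longrightarrow> x \<noteq> 0\<^sub>v p \<Longrightarrow> (L *\<^sub>v x) \<bullet>c x > 0"
  and Mpd: "\<And>x. x \<in> carrier_vec p \<Longrightarrow> x \<noteq> 0\<^sub>v p \<Longrightarrow> (M *\<^sub>v x) \<bullet>c x > 0"
  and VV: "V * adj V = M"
  and BB: "B * adj B = complex_of_real (sw^2) \<cdot>\<^sub>m L + complex_of_real (sv^2) \<cdot>\<^sub>m (L * M * L)"
begin

lemma dims[simp]: "dim_row L = p" "dim_col L = p" "dim_row M = p" "dim_col M = p"
  "dim_row V = p" "dim_col V = m" "dim_row B = p" "dim_col B = q"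
  using L M V B by auto

lemma herm: "adj H = H \<Longrightarrow> H \<in> carrier_mat p p \<Longrightarrow> x \<in> carrier_vec p \<Longrightarrow> y \<in> carrier_vec p
  \<Longrightarrow> (H *\<^sub>v x) \<bullet>c y = x \<bullet>c (H *\<^sub>v y)"
  using cscalar_adj[of H p p x y] by simp

lemma L_inj: "x \<in> carrier_vec p \<Longrightarrow> L *\<^sub>v x = 0\<^sub>v p \<Longrightarrow> x = 0\<^sub>v p"
  using Lpd[of x] cs_zero_left[of x p] by force

lemma M_inj: "x \<in> carrier_vec p \<Longrightarrow> M *\<^sub>v x = 0\<^sub>v p \<Longrightarrow> x = 0\<^sub>v p"
  using Mpd[of x] cs_zero_left[of x p] by force

lemma VVv: "x \<in> carrier_vec p \<Longrightarrow> V *\<^sub>v (adj V *\<^sub>v x) = M *\<^sub>v x"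
  using VV mv_assoc[of V "adj V" x] by simp

lemma BBv: assumes x: "x \<in> carrier_vec p"
  shows "B *\<^sub>v (adj B *\<^sub>v x) = complex_of_real (sw^2) \<cdot>\<^sub>v (L *\<^sub>v x)
           + complex_of_real (sv^2) \<cdot>\<^sub>v (L *\<^sub>v (M *\<^sub>v (L *\<^sub>v x)))"
proof -
  have "B *\<^sub>v (adj B *\<^sub>v x) = (B * adj B) *\<^sub>v x" using x by (simp add: mv_assoc)
  also have "\<dots> = complex_of_real (sw^2) \<cdot>\<^sub>v (L *\<^sub>v x)
           + complex_of_real (sv^2) \<cdot>\<^sub>v ((L * M * L) *\<^sub>v x)"
    unfolding BB using x by (simp add: mv_add mv_smat)
  also have "(L * M * L) *\<^sub>v x = L *\<^sub>v (M *\<^sub>v (L *\<^sub>v x))" using x by (simp add: mv_assoc)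
  finally show ?thesis .
qed

definition As :: "complex \<Rightarrow> complex mat" where "As s = s \<cdot>\<^sub>m 1\<^sub>m p + L * M"
definition K :: "complex \<Rightarrow> complex mat" where "K s = minv (As s)"

lemma As_carrier[simp]: "As s \<in> carrier_mat p p" unfolding As_def using L M by auto
lemma As_dims[simp]: "dim_row (As s) = p" "dim_col (As s) = p" using carrier_matD[OF As_carrier] by auto

lemma As_mv: "x \<in> carrier_vec p \<Longrightarrow> As s *\<^sub>v x = s \<cdot>\<^sub>v x + L *\<^sub>v (M *\<^sub>v x)"
  unfolding As_def by (simp add: mv_add mv_smat mv_one mv_assoc)

lemma adj_As: "adj (As s) = cnj s \<cdot>\<^sub>m 1\<^sub>m p + M * L"
proof -
  have "adj (As s) = adj (s \<cdot>\<^sub>m 1\<^sub>m p) + adj (L * M)"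
    unfolding As_def using L M by (intro adj_add[of _ p p]) auto
  also have "adj (L * M) = M * L" using adj_mult[OF L M] LH MH by simp
  finally show ?thesis by (simp add: adj_smult)
qed

lemma adjAs_mv: "x \<in> carrier_vec p \<Longrightarrow> adj (As s) *\<^sub>v x = cnj s \<cdot>\<^sub>v x + M *\<^sub>v (L *\<^sub>v x)"
  unfolding adj_As by (simp add: mv_add mv_smat mv_one mv_assoc)

lemma As_ker: assumes s: "Re s = 0" and x: "x \<in> carrier_vec p" and eq: "As s *\<^sub>v x = 0\<^sub>v p"
  shows "x = 0\<^sub>v p"
proof (rule ccontr)
  assume x0: "x \<noteq> 0\<^sub>v p"
  define y where "y = M *\<^sub>v x"
  have y: "y \<in> carrier_vec p" unfolding y_def using M x by auto
  have y0: "y \<noteq> 0\<^sub>v p" using M_inj[OF x] x0 unfolding y_def by auto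
  have Ly: "L *\<^sub>v y = (-s) \<cdot>\<^sub>v x"
  proof (rule eq_vecI)
    fix i assume i: "i < dim_vec ((-s) \<cdot>\<^sub>v x)"
    from arg_cong[OF eq[unfolded As_mv[OF x]], of "\<lambda>v. v $ i"] i x
    show "(L *\<^sub>v y) $ i = ((-s) \<cdot>\<^sub>v x) $ i" unfolding y_def by (auto simp: eq_neg_iff_add_eq_0 add.commute)
  qed (use x in auto)
  have P: "(L *\<^sub>v y) \<bullet>c y > 0" using Lpd[OF y y0] .
  have Q: "(M *\<^sub>v x) \<bullet>c x > 0" using Mpd[OF x x0] .
  have "(L *\<^sub>v y) \<bullet>c y = ((-s) \<cdot>\<^sub>v x) \<bullet>c y" by (simp only: Ly)
  also have "\<dots> = (-s) * (x \<bullet>c (M *\<^sub>v x))"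
    unfolding y_def using x by (subst cs_smult_left) auto
  also have "x \<bullet>c (M *\<^sub>v x) = (M *\<^sub>v x) \<bullet>c x" using herm[OF MH M x x] by simp
  finally have "(L *\<^sub>v y) \<bullet>c y = (-s) * ((M *\<^sub>v x) \<bullet>c x)" .
  from cpos_div[OF P Q this] have "-s > 0" .
  then show False using s by (simp add: less_complex_def)
qed

lemma K_props: assumes s: "Re s = 0"
  shows "K s \<in> carrier_mat p p" "As s * K s = 1\<^sub>m p" "K s * As s = 1\<^sub>m p"
  using inv_ker[OF As_carrier As_ker[OF s]] unfolding K_def by auto

lemma K_dims[simp]: "Re s = 0 \<Longrightarrow> dim_row (K s) = p" "Re s = 0 \<Longrightarrow> dim_col (K s) = p"
  using K_props(1) by auto

lemma Kv: assumes s: "Re s = 0" and x: "x \<in> carrier_vec p"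
  shows "As s *\<^sub>v (K s *\<^sub>v x) = x" "K s *\<^sub>v (As s *\<^sub>v x) = x"
    "adj (As s) *\<^sub>v (adj (K s) *\<^sub>v x) = x"
proof -
  show "As s *\<^sub>v (K s *\<^sub>v x) = x"
    using mv_assoc[of "As s" "K s" x, symmetric] K_props[OF s] x by (simp add: mv_one)
  show "K s *\<^sub>v (As s *\<^sub>v x) = x"
    using mv_assoc[of "K s" "As s" x, symmetric] K_props[OF s] x by (simp add: mv_one)
  have "adj (As s) * adj (K s) = 1\<^sub>m p"
    using adj_mult[of "K s" p p "As s" p] K_props[OF s] by simp
  then show "adj (As s) *\<^sub>v (adj (K s) *\<^sub>v x) = x"
    using mv_assoc[of "adj (As s)" "adj (K s)" x, symmetric] K_props[OF s] x by (simp add: mv_one)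
qed

definition T :: "complex mat" where "T = M * L * M"
definition Y :: "complex mat" where "Y = minv T"

lemma T_carrier[simp]: "T \<in> carrier_mat p p" unfolding T_def using L M by auto
lemma T_dims[simp]: "dim_row T = p" "dim_col T = p" using carrier_matD[OF T_carrier] by auto
lemma T_mv: "x \<in> carrier_vec p \<Longrightarrow> T *\<^sub>v x = M *\<^sub>v (L *\<^sub>v (M *\<^sub>v x))"
  unfolding T_def by (simp add: mv_assoc)
lemma T_ker: "x \<in> carrier_vec p \<Longrightarrow> T *\<^sub>v x = 0\<^sub>v p \<Longrightarrow> x = 0\<^sub>v p"
  unfolding T_mv using M_inj L_inj M L by (metis mult_mat_vec_carrier)

lemma Y_props: "Y \<in> carrier_mat p p" "T * Y = 1\<^sub>m p" "Y * T = 1\<^sub>m p"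
  using inv_ker[OF T_carrier T_ker] unfolding Y_def by auto

lemma Y_dims[simp]: "dim_row Y = p" "dim_col Y = p" using Y_props(1) by auto

lemma adj_T: "adj T = T"
  unfolding T_def using adj_mult[of "M * L" p p M p] adj_mult[OF M L] LH MH L M
  by (simp add: assoc_mult_mat[of M p p L p M p])

lemma adj_Y: "adj Y = Y"
proof -
  have "adj Y * T = 1\<^sub>m p" using adj_mult[of T p p Y p] Y_props adj_T by simp
  then have "adj Y * T * Y = Y" using Y_props by simp
  moreover have "adj Y * T * Y = adj Y" 
    using assoc_mult_mat[of "adj Y" p p T p Y p] Y_props by simp
  ultimately show ?thesis by simp
qed

lemma Yv: assumes x: "x \<in> carrier_vec p"
  shows "T *\<^sub>v (Y *\<^sub>v x) = x" "Y *\<^sub>v (T *\<^sub>v x) = x"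
  using mv_assoc[of T Y x, symmetric] mv_assoc[of Y T x, symmetric] Y_props x
  by (simp_all add: mv_one)

definition X :: "complex mat" where "X = adj V * Y * V"
lemma X_carrier[simp]: "X \<in> carrier_mat m m" unfolding X_def using V by auto
lemma X_dims[simp]: "dim_row X = m" "dim_col X = m" using carrier_matD[OF X_carrier] by auto
lemma X_mv: "z \<in> carrier_vec m \<Longrightarrow> X *\<^sub>v z = adj V *\<^sub>v (Y *\<^sub>v (V *\<^sub>v z))"
  unfolding X_def by (simp add: mv_assoc)
lemma adj_X: "adj X = X"
proof -
  have VY: "adj V * Y \<in> carrier_mat m p" using V Y_props(1) by (metis adj_carrier mult_carrier_mat)
  have "adj X = adj V * adj (adj V * Y)" unfolding X_def
    using adj_mult[OF VY V] by simp
  also have "adj (adj V * Y) = Y * V" using adj_mult[of "adj V" m p Y p] V Y_props adj_Y by simp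
  finally show ?thesis unfolding X_def using assoc_mult_mat[of "adj V" m p Y p V m] V Y_props by simp
qed

definition mu :: real where "mu = sigma_max X"

end


context absys begin

lemma L_nonneg: assumes x: "x \<in> carrier_vec p" shows "(L *\<^sub>v x) \<bullet>c x \<ge> 0"
proof (cases "x = 0\<^sub>v p")
  case True
  then have "L *\<^sub>v x = 0\<^sub>v p" using mv_zero[of x L] x by simp
  then show ?thesis using cs_zero_left[of x p] x by simp
next
  case False
  then show ?thesis using Lpd[OF x] by (simp add: less_imp_le)
qed

lemma N_eig: assumes y: "y \<in> carrier_vec p" and y0: "y \<noteq> 0\<^sub>v p" and ev: "M *\<^sub>v (L *\<^sub>v y) = r \<cdot>\<^sub>v y"
  shows "r > 0"
proof -
  define g where "g = L *\<^sub>v y"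
  have g: "g \<in> carrier_vec p" unfolding g_def using L y by auto
  have g0: "g \<noteq> 0\<^sub>v p" using L_inj[OF y] y0 unfolding g_def by auto
  have P: "(M *\<^sub>v g) \<bullet>c g > 0" using Mpd[OF g g0] .
  have Q: "(L *\<^sub>v y) \<bullet>c y > 0" using Lpd[OF y y0] .
  have "(M *\<^sub>v g) \<bullet>c g = (r \<cdot>\<^sub>v y) \<bullet>c g" using ev unfolding g_def by simp
  also have "\<dots> = r * (y \<bullet>c g)" using y g by (subst cs_smult_left) auto
  also have "y \<bullet>c g = (L *\<^sub>v y) \<bullet>c y" unfolding g_def using herm[OF LH L y y] by simp
  finally show ?thesis using cpos_div[OF P Q] by simp
qed

lemma X_eig: assumes y: "y \<in> carrier_vec p" and y0: "y \<noteq> 0\<^sub>v p" and ev: "M *\<^sub>v (L *\<^sub>v y) = r \<cdot>\<^sub>v y"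
  shows "inverse (Re r) \<le> mu"
proof -
  have r: "r > 0" by (rule N_eig[OF y y0 ev])
  then obtain \<rho> where rho: "r = of_real \<rho>" "\<rho> > 0" using cpos_real by metis
  define g where "g = L *\<^sub>v y"
  have g: "g \<in> carrier_vec p" unfolding g_def using L y by auto
  have g0: "g \<noteq> 0\<^sub>v p" using L_inj[OF y] y0 unfolding g_def by auto
  have Mg: "M *\<^sub>v g = r \<cdot>\<^sub>v y" using ev unfolding g_def .
  have Tg: "T *\<^sub>v g = r \<cdot>\<^sub>v (M *\<^sub>v g)"
    using g y by (simp add: T_mv Mg mv_svec ev g_def)
  have "g = Y *\<^sub>v (T *\<^sub>v g)" using Yv(2)[OF g] by simp
  also have "\<dots> = r \<cdot>\<^sub>v (Y *\<^sub>v (M *\<^sub>v g))" unfolding Tg using g by (simp add: mv_svec)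
  finally have "inverse r \<cdot>\<^sub>v g = inverse r \<cdot>\<^sub>v (r \<cdot>\<^sub>v (Y *\<^sub>v (M *\<^sub>v g)))" by simp
  also have "\<dots> = Y *\<^sub>v (M *\<^sub>v g)" using rho by (simp add: smult_smult_assoc)
  finally have YMg: "Y *\<^sub>v (M *\<^sub>v g) = inverse r \<cdot>\<^sub>v g" by simp
  define z where "z = adj V *\<^sub>v g"
  have z: "z \<in> carrier_vec m" unfolding z_def by (rule mult_mat_vec_carrier[OF adj_carrier[OF V] g])
  have z0: "z \<noteq> 0\<^sub>v m"
  proof
    assume "z = 0\<^sub>v m"
    then have "M *\<^sub>v g = V *\<^sub>v 0\<^sub>v m" using VVv[OF g] unfolding z_def by simp
    also have "\<dots> = 0\<^sub>v p" by (rule eq_vecI) (auto simp: scalar_prod_def)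
    finally show False using M_inj[OF g] g0 by simp
  qed
  have Xz: "X *\<^sub>v z = inverse r \<cdot>\<^sub>v z"
    using z g by (simp add: X_mv z_def VVv YMg mv_svec)
  have "(adj X * X) *\<^sub>v z = X *\<^sub>v (X *\<^sub>v z)" using z by (simp add: adj_X mv_assoc)
  also have "\<dots> = (inverse r * inverse r) \<cdot>\<^sub>v z" using z by (simp add: Xz mv_svec smult_smult_assoc)
  finally have "eigenvector (adj X * X) z (inverse r * inverse r)"
    unfolding eigenvector_def using z z0 by simp
  then have "sqrt (Re (inverse r * inverse r)) \<le> mu"
    unfolding mu_def by (intro sm_ge[OF X_carrier mpos]) (auto simp: eigenvalue_def)
  moreover have "sqrt (Re (inverse r * inverse r)) = inverse (Re r)"
  proof -
    have "inverse r * inverse r = of_real (inverse \<rho> * inverse \<rho>)" using rho by simp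
    then have "Re (inverse r * inverse r) = inverse \<rho> * inverse \<rho>" by (simp only: Re_complex_of_real)
    then show ?thesis using rho by simp
  qed
  ultimately show ?thesis by simp
qed

lemma N_has_eig: "\<exists>y r. y \<in> carrier_vec p \<and> y \<noteq> 0\<^sub>v p \<and> M *\<^sub>v (L *\<^sub>v y) = r \<cdot>\<^sub>v y"
proof -
  have NLc: "M * L \<in> carrier_mat p p" using M L by auto
  from spectrum_non_empty[OF NLc p] obtain k where "eigenvalue (M * L) k" unfolding spectrum_def by auto
  then obtain y where "eigenvector (M * L) y k" unfolding eigenvalue_def by auto
  then have "y \<in> carrier_vec p" "y \<noteq> 0\<^sub>v p" "(M * L) *\<^sub>v y = k \<cdot>\<^sub>v y" unfolding eigenvector_def using NLc by auto
  then show ?thesis by (auto simp: mv_assoc)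
qed

lemma mu_pos: "mu > 0"
proof -
  obtain y r where y: "y \<in> carrier_vec p" "y \<noteq> 0\<^sub>v p" "M *\<^sub>v (L *\<^sub>v y) = r \<cdot>\<^sub>v y" using N_has_eig by blast
  have "r > 0" using N_eig[OF y] .
  then have "Re r > 0" by (simp add: less_complex_def)
  moreover have "inverse (Re r) \<le> mu" using X_eig[OF y] .
  ultimately show ?thesis by (meson inverse_positive_iff_positive less_le_trans)
qed

lemma X_psd: assumes z: "z \<in> carrier_vec m" shows "(X *\<^sub>v z) \<bullet>c z \<ge> 0"
proof -
  define w where "w = V *\<^sub>v z"
  have w: "w \<in> carrier_vec p" unfolding w_def using V z by auto
  define t where "t = Y *\<^sub>v w"
  have t: "t \<in> carrier_vec p" unfolding t_def using Y_props w by auto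
  have Tt: "T *\<^sub>v t = w" unfolding t_def using Yv(1)[OF w] .
  have "(X *\<^sub>v z) \<bullet>c z = (adj V *\<^sub>v t) \<bullet>c z" using z by (simp add: X_mv t_def w_def)
  also have "\<dots> = t \<bullet>c (V *\<^sub>v z)" using cscalar_adj[of "adj V" m p t z] V t z by simp
  also have "\<dots> = t \<bullet>c (M *\<^sub>v (L *\<^sub>v (M *\<^sub>v t)))" using Tt t by (simp add: T_mv w_def)
  also have "\<dots> = (M *\<^sub>v t) \<bullet>c (L *\<^sub>v (M *\<^sub>v t))" using herm[OF MH M t, of "L *\<^sub>v (M *\<^sub>v t)"] t L M by simp
  also have "\<dots> = (L *\<^sub>v (M *\<^sub>v t)) \<bullet>c (M *\<^sub>v t)" using herm[OF LH L, of "M *\<^sub>v t" "M *\<^sub>v t"] t M by simp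
  finally show ?thesis using L_nonneg[of "M *\<^sub>v t"] t M by simp
qed

end


context absys begin

definition N :: "complex vec \<Rightarrow> complex vec" where "N x = M *\<^sub>v (L *\<^sub>v x)"

lemma N_carrier[simp]: "N x \<in> carrier_vec p" unfolding N_def by (rule carrier_vecI) simp
lemma N_dim[simp]: "dim_vec (N x) = p" unfolding N_def by simp
lemma N_smult: "x \<in> carrier_vec p \<Longrightarrow> N (a \<cdot>\<^sub>v x) = a \<cdot>\<^sub>v N x"
  unfolding N_def by (simp add: mv_svec)
lemma N_add: "x \<in> carrier_vec p \<Longrightarrow> y \<in> carrier_vec p \<Longrightarrow> N (x + y) = N x + N y"
  unfolding N_def by (simp add: mv_vadd)
lemma N_minus: "x \<in> carrier_vec p \<Longrightarrow> y \<in> carrier_vec p \<Longrightarrow> N (x - y) = N x - N y"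
  unfolding N_def by (simp add: mv_vminus)

definition Pi :: "real \<Rightarrow> complex mat" where
  "Pi \<omega> = adj V * K (\<i> * complex_of_real \<omega>) * B"

lemma Re_s[simp]: "Re (\<i> * complex_of_real \<omega>) = 0" by simp

lemma Pi_carrier[simp]: "Pi \<omega> \<in> carrier_mat m q"
  unfolding Pi_def using V B K_props(1)[OF Re_s] by (metis adj_carrier mult_carrier_mat)
lemma Pi_dims[simp]: "dim_row (Pi \<omega>) = m" "dim_col (Pi \<omega>) = q"
  using carrier_matD[OF Pi_carrier] by auto

lemma Pi_mv: "w \<in> carrier_vec q \<Longrightarrow> Pi \<omega> *\<^sub>v w = adj V *\<^sub>v (K (\<i> * complex_of_real \<omega>) *\<^sub>v (B *\<^sub>v w))"
  unfolding Pi_def by (simp add: mv_assoc)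

lemma adj_Pi: "adj (Pi \<omega>) = adj B * (adj (K (\<i> * complex_of_real \<omega>)) * V)"
proof -
  let ?K = "K (\<i> * complex_of_real \<omega>)"
  have K: "?K \<in> carrier_mat p p" using K_props(1)[OF Re_s] .
  have VK: "adj V * ?K \<in> carrier_mat m p" using V K by (metis adj_carrier mult_carrier_mat)
  have "adj (Pi \<omega>) = adj B * adj (adj V * ?K)" unfolding Pi_def using adj_mult[OF VK B] .
  also have "adj (adj V * ?K) = adj ?K * V" using adj_mult[OF adj_carrier[OF V] K] by simp
  finally show ?thesis .
qed

lemma adjPi_mv: "u \<in> carrier_vec m \<Longrightarrow>
   adj (Pi \<omega>) *\<^sub>v u = adj B *\<^sub>v (adj (K (\<i> * complex_of_real \<omega>)) *\<^sub>v (V *\<^sub>v u))"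
  unfolding adj_Pi by (simp add: mv_assoc)

lemma smult_zero_vec: assumes k0: "(k::complex) \<noteq> 0" and u: "u \<in> carrier_vec n" and eq: "k \<cdot>\<^sub>v u = 0\<^sub>v n"
  shows "u = 0\<^sub>v n"
proof -
  have "u = inverse k \<cdot>\<^sub>v (k \<cdot>\<^sub>v u)" using k0 by (simp add: smult_smult_assoc)
  also have "\<dots> = 0\<^sub>v n" unfolding eq by (rule eq_vecI) auto
  finally show ?thesis .
qed

lemma up_step1:
  assumes ev: "eigenvector (adj (Pi \<omega>) * Pi \<omega>) v k" and k0: "k \<noteq> 0"
  shows "\<exists>y. y \<in> carrier_vec p \<and> y \<noteq> 0\<^sub>v p \<and>
     complex_of_real (sw^2) \<cdot>\<^sub>v N y + complex_of_real (sv^2) \<cdot>\<^sub>v N (N y)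
       = (k * complex_of_real (\<omega>^2)) \<cdot>\<^sub>v y + k \<cdot>\<^sub>v N (N y)"
proof -
  define s where "s = \<i> * complex_of_real \<omega>"
  have s: "Re s = 0" unfolding s_def by simp
  define Ks where "Ks = K s"
  have Ks: "Ks \<in> carrier_mat p p" unfolding Ks_def using K_props(1)[OF s] .
  note e = eig_AHA[OF Pi_carrier ev]
  have v: "v \<in> carrier_vec q" and v0: "v \<noteq> 0\<^sub>v q" using e by auto
  define u where "u = Pi \<omega> *\<^sub>v v"
  have u: "u \<in> carrier_vec m" unfolding u_def using v by (metis Pi_carrier mult_mat_vec_carrier)
  have u0: "u \<noteq> 0\<^sub>v m"
  proof
    assume "u = 0\<^sub>v m"
    then have "k * (v \<bullet>c v) = 0" using e(1) unfolding u_def by (simp add: cs_zero_left)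
    then show False using k0 v v0 by simp
  qed
  have evq: "(adj (Pi \<omega>) * Pi \<omega>) *\<^sub>v v = k \<cdot>\<^sub>v v" using ev unfolding eigenvector_def by simp
  then have PHu: "adj (Pi \<omega>) *\<^sub>v u = k \<cdot>\<^sub>v v" unfolding u_def using v by (simp add: mv_assoc)
  define y where "y = adj Ks *\<^sub>v (V *\<^sub>v u)"
  have y: "y \<in> carrier_vec p" unfolding y_def using Ks V u
    by (metis adj_carrier mult_mat_vec_carrier)
  have PHu2: "adj (Pi \<omega>) *\<^sub>v u = adj B *\<^sub>v y" unfolding y_def Ks_def s_def using adjPi_mv[OF u] .
  define Gy where "Gy = complex_of_real (sw^2) \<cdot>\<^sub>v (L *\<^sub>v y)
           + complex_of_real (sv^2) \<cdot>\<^sub>v (L *\<^sub>v (M *\<^sub>v (L *\<^sub>v y)))"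
  have Gy: "Gy \<in> carrier_vec p" unfolding Gy_def using L M y by auto
  have "Pi \<omega> *\<^sub>v (adj (Pi \<omega>) *\<^sub>v u) = Pi \<omega> *\<^sub>v (k \<cdot>\<^sub>v v)" by (simp only: PHu)
  also have "\<dots> = k \<cdot>\<^sub>v u" unfolding u_def using v by (simp add: mv_svec)
  finally have "Pi \<omega> *\<^sub>v (adj (Pi \<omega>) *\<^sub>v u) = k \<cdot>\<^sub>v u" .
  then have E1: "adj V *\<^sub>v (Ks *\<^sub>v Gy) = k \<cdot>\<^sub>v u"
    unfolding PHu2 Pi_mv[OF mult_mat_vec_carrier[OF adj_carrier[OF B] y]] BBv[OF y] Gy_def Ks_def s_def .
  have y0: "y \<noteq> 0\<^sub>v p"
  proof
    assume y0: "y = 0\<^sub>v p"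
    have "Gy = 0\<^sub>v p" unfolding Gy_def y0 by (rule eq_vecI) (auto simp: scalar_prod_def)
    then have "Ks *\<^sub>v Gy = 0\<^sub>v p" by (intro eq_vecI) (auto simp: scalar_prod_def Ks[THEN carrier_matD(1)] Ks[THEN carrier_matD(2)])
    then have "adj V *\<^sub>v (Ks *\<^sub>v Gy) = 0\<^sub>v m" by (intro eq_vecI) (auto simp: scalar_prod_def)
    then have "k \<cdot>\<^sub>v u = 0\<^sub>v m" using E1 by simp
    then show False using smult_zero_vec[OF k0 u] u0 by simp
  qed
  define w1 where "w1 = Ks *\<^sub>v Gy"
  have w1: "w1 \<in> carrier_vec p" unfolding w1_def using Ks Gy by auto
  have E2: "M *\<^sub>v w1 = k \<cdot>\<^sub>v (V *\<^sub>v u)"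
    using arg_cong[OF E1, of "\<lambda>x. V *\<^sub>v x"] VVv[OF w1] u unfolding w1_def by (simp add: mv_svec)
  have E3: "adj Ks *\<^sub>v (M *\<^sub>v w1) = k \<cdot>\<^sub>v y"
    unfolding E2 y_def using u V Ks by (simp add: mv_svec)
  have Mw1: "M *\<^sub>v w1 = k \<cdot>\<^sub>v (cnj s \<cdot>\<^sub>v y + N y)"
  proof -
    have "M *\<^sub>v w1 = adj (As s) *\<^sub>v (adj Ks *\<^sub>v (M *\<^sub>v w1))"
      using Kv(3)[OF s, of "M *\<^sub>v w1"] w1 M unfolding Ks_def by simp
    also have "\<dots> = adj (As s) *\<^sub>v (k \<cdot>\<^sub>v y)" unfolding E3 ..
    also have "\<dots> = k \<cdot>\<^sub>v (cnj s \<cdot>\<^sub>v y + N y)"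
      using y by (simp add: adjAs_mv mv_svec N_def)
    finally show ?thesis .
  qed
  have Aw1: "s \<cdot>\<^sub>v w1 + L *\<^sub>v (M *\<^sub>v w1) = Gy"
    using Kv(1)[OF s Gy] As_mv[OF w1] unfolding w1_def Ks_def by simp
  have "M *\<^sub>v (s \<cdot>\<^sub>v w1 + L *\<^sub>v (M *\<^sub>v w1)) = M *\<^sub>v Gy" unfolding Aw1 ..
  then have E4: "s \<cdot>\<^sub>v (M *\<^sub>v w1) + N (M *\<^sub>v w1) = M *\<^sub>v Gy"
    using w1 L M by (simp add: mv_vadd mv_svec N_def)
  have MGy: "M *\<^sub>v Gy = complex_of_real (sw^2) \<cdot>\<^sub>v N y + complex_of_real (sv^2) \<cdot>\<^sub>v N (N y)"
    unfolding Gy_def N_def using y L M by (simp add: mv_vadd mv_svec)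
  have NMw1: "N (M *\<^sub>v w1) = k \<cdot>\<^sub>v (cnj s \<cdot>\<^sub>v N y + N (N y))"
    unfolding Mw1 using y by (simp add: N_smult N_add)
  have ii: "\<i> * \<i> = (-1::complex)" by simp
  have "complex_of_real (sw^2) \<cdot>\<^sub>v N y + complex_of_real (sv^2) \<cdot>\<^sub>v N (N y)
       = (k * complex_of_real (\<omega>^2)) \<cdot>\<^sub>v y + k \<cdot>\<^sub>v N (N y)"
  proof (rule eq_vecI)
    fix i assume i: "i < dim_vec ((k * complex_of_real (\<omega>^2)) \<cdot>\<^sub>v y + k \<cdot>\<^sub>v N (N y))"
    then have ip: "i < p" using y by simp
    have "(s \<cdot>\<^sub>v (M *\<^sub>v w1) + N (M *\<^sub>v w1)) $ i = (M *\<^sub>v Gy) $ i" unfolding E4 ..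
    then have "(s \<cdot>\<^sub>v (M *\<^sub>v w1) + k \<cdot>\<^sub>v (cnj s \<cdot>\<^sub>v N y + N (N y))) $ i = (M *\<^sub>v Gy) $ i"
      by (simp only: NMw1)
    then have "(s \<cdot>\<^sub>v (k \<cdot>\<^sub>v (cnj s \<cdot>\<^sub>v y + N y)) + k \<cdot>\<^sub>v (cnj s \<cdot>\<^sub>v N y + N (N y))) $ i = (M *\<^sub>v Gy) $ i"
      by (simp only: Mw1)
    then have "s * (k * (cnj s * y $ i + N y $ i)) + k * (cnj s * N y $ i + N (N y) $ i)
       = complex_of_real (sw^2) * N y $ i + complex_of_real (sv^2) * N (N y) $ i"
      unfolding MGy using ip y by simp
    moreover have "s * (k * (cnj s * y $ i + N y $ i)) + k * (cnj s * N y $ i + N (N y) $ i)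
       = k * complex_of_real (\<omega>^2) * y $ i + k * N (N y) $ i"
      unfolding s_def using ii by (simp add: algebra_simps power2_eq_square)
    ultimately show "(complex_of_real (sw^2) \<cdot>\<^sub>v N y + complex_of_real (sv^2) \<cdot>\<^sub>v N (N y)) $ i
       = ((k * complex_of_real (\<omega>^2)) \<cdot>\<^sub>v y + k \<cdot>\<^sub>v N (N y)) $ i" using ip y by simp
  qed (use y in simp)
  then show ?thesis using y y0 by blast
qed

end


context absys begin

lemma quad_eig:
  assumes y: "y \<in> carrier_vec p" and y0: "y \<noteq> 0\<^sub>v p" and a0: "a \<noteq> 0"
  and eq: "\<And>i. i < p \<Longrightarrow> a * N (N y) $ i + b * N y $ i + c * y $ i = 0"
  shows "\<exists>z r. z \<in> carrier_vec p \<and> z \<noteq> 0\<^sub>v p \<and> N z = r \<cdot>\<^sub>v z \<and> a * r^2 + b * r + c = 0"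
proof -
  define d where "d = csqrt (b^2 - 4 * a * c)"
  have d2: "d^2 = b^2 - 4 * a * c" unfolding d_def by simp
  define r1 where "r1 = (- b + d) / (2 * a)"
  define r2 where "r2 = (- b - d) / (2 * a)"
  have sum: "a * (r1 + r2) = - b" unfolding r1_def r2_def using a0 by (simp add: field_simps)
  have prod: "a * (r1 * r2) = c"
  proof -
    have "4 * a * a * (r1 * r2) = (- b + d) * (- b - d)" unfolding r1_def r2_def using a0
      by (simp add: field_simps)
    also have "\<dots> = b^2 - d^2" by (simp add: algebra_simps power2_eq_square)
    also have "\<dots> = 4 * a * c" using d2 by simp
    finally have "(4 * a) * (a * (r1 * r2)) = (4 * a) * c" by (simp add: algebra_simps)
    then show ?thesis using a0 by simp
  qed
  have root1: "a * r1^2 + b * r1 + c = 0"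
  proof -
    have "a * r1^2 + b * r1 + c = a * r1^2 - a * (r1 + r2) * r1 + a * (r1 * r2)"
      using sum prod by (simp add: algebra_simps)
    also have "\<dots> = 0" by (simp add: algebra_simps power2_eq_square)
    finally show ?thesis .
  qed
  have root2: "a * r2^2 + b * r2 + c = 0"
  proof -
    have "a * r2^2 + b * r2 + c = a * r2^2 - a * (r1 + r2) * r2 + a * (r1 * r2)"
      using sum prod by (simp add: algebra_simps)
    also have "\<dots> = 0" by (simp add: algebra_simps power2_eq_square)
    finally show ?thesis .
  qed
  define z where "z = N y - r2 \<cdot>\<^sub>v y"
  have z: "z \<in> carrier_vec p" unfolding z_def using y by simp
  show ?thesis
  proof (cases "z = 0\<^sub>v p")
    case True
    have "N y = r2 \<cdot>\<^sub>v y"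
    proof (rule eq_vecI)
      fix i assume i: "i < dim_vec (r2 \<cdot>\<^sub>v y)"
      then have ip: "i < p" using y by simp
      from arg_cong[OF True, of "\<lambda>v. v $ i"] ip y show "N y $ i = (r2 \<cdot>\<^sub>v y) $ i"
        unfolding z_def by simp
    qed (use y in simp)
    then show ?thesis using y y0 root2 by blast
  next
    case False
    have Nz: "N z = N (N y) - r2 \<cdot>\<^sub>v N y" unfolding z_def using y by (simp add: N_minus N_smult)
    have "N z = r1 \<cdot>\<^sub>v z"
    proof (rule eq_vecI)
      fix i assume i: "i < dim_vec (r1 \<cdot>\<^sub>v z)"
      then have ip: "i < p" using z by simp
      have e: "a * N (N y) $ i + b * N y $ i + c * y $ i = 0" using eq[OF ip] .
      have "a * (N (N y) $ i - r2 * N y $ i - r1 * (N y $ i - r2 * y $ i)) =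
            a * N (N y) $ i - (a * (r1 + r2)) * N y $ i + (a * (r1 * r2)) * y $ i"
        by (simp add: algebra_simps)
      also have "\<dots> = 0" unfolding sum prod using e by (simp add: algebra_simps)
      finally have "N (N y) $ i - r2 * N y $ i - r1 * (N y $ i - r2 * y $ i) = 0" using a0 by simp
      then show "N z $ i = (r1 \<cdot>\<^sub>v z) $ i" unfolding Nz using ip y unfolding z_def by simp
    qed (use z in simp)
    then show ?thesis using z False root1 by blast
  qed
qed

lemma up_bound: assumes ev: "eigenvector (adj (Pi \<omega>) * Pi \<omega>) v k"
  shows "Re k \<le> sw^2 * mu + sv^2"
proof -
  note e = eig_AHA[OF Pi_carrier ev]
  have mu0: "sw^2 * mu \<ge> 0" using mu_pos by simp
  show ?thesis
  proof (cases "Re k \<le> sv^2")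
    case True then show ?thesis using mu0 by simp
  next
    case False
    then have k0: "k \<noteq> 0" using e(5) by (auto simp: zero_le_power2)
    obtain y where y: "y \<in> carrier_vec p" "y \<noteq> 0\<^sub>v p" and
      E: "complex_of_real (sw^2) \<cdot>\<^sub>v N y + complex_of_real (sv^2) \<cdot>\<^sub>v N (N y)
       = (k * complex_of_real (\<omega>^2)) \<cdot>\<^sub>v y + k \<cdot>\<^sub>v N (N y)"
      using up_step1[OF ev k0] by blast
    define a where "a = complex_of_real (sv^2) - k"
    define b where "b = complex_of_real (sw^2)"
    define c where "c = - (k * complex_of_real (\<omega>^2))"
    have a0: "a \<noteq> 0" using False unfolding a_def by (auto simp: complex_eq_iff)
    have eqi: "a * N (N y) $ i + b * N y $ i + c * y $ i = 0" if ip: "i < p" for i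
    proof -
      from arg_cong[OF E, of "\<lambda>v. v $ i"] ip y
      have "complex_of_real (sw^2) * N y $ i + complex_of_real (sv^2) * N (N y) $ i
          = k * complex_of_real (\<omega>^2) * y $ i + k * N (N y) $ i" by simp
      then show ?thesis unfolding a_def b_def c_def by (simp add: algebra_simps)
    qed
    obtain z r where z: "z \<in> carrier_vec p" "z \<noteq> 0\<^sub>v p" and Nz: "N z = r \<cdot>\<^sub>v z"
      and root: "a * r^2 + b * r + c = 0"
      using quad_eig[OF y a0 eqi] by blast
    have ev': "M *\<^sub>v (L *\<^sub>v z) = r \<cdot>\<^sub>v z" using Nz unfolding N_def .
    have r0: "r > 0" using N_eig[OF z ev'] .
    have invle: "inverse (Re r) \<le> mu" using X_eig[OF z ev'] .
    obtain \<rho> where rho: "r = of_real \<rho>" "\<rho> > 0" using cpos_real[OF r0] by metis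
    define \<kappa> where "\<kappa> = Re k"
    have kk: "k = of_real \<kappa>" "\<kappa> \<ge> 0" using e unfolding \<kappa>_def by auto
    have "complex_of_real ((sv^2 - \<kappa>) * \<rho>^2 + sw^2 * \<rho> - \<kappa> * \<omega>^2) = 0"
      using root unfolding a_def b_def c_def kk(1) rho(1) by simp
    then have req: "(sv^2 - \<kappa>) * \<rho>^2 + sw^2 * \<rho> - \<kappa> * \<omega>^2 = 0" by (simp only: of_real_eq_0_iff)
    have "\<kappa> * \<rho>^2 \<le> \<kappa> * (\<rho>^2 + \<omega>^2)" using kk(2) by (simp add: mult_left_mono)
    also have "\<dots> = sv^2 * \<rho>^2 + sw^2 * \<rho>" using req by (simp add: algebra_simps)
    also have "\<dots> = (sv^2 + sw^2 * inverse \<rho>) * \<rho>^2" using rho(2)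
      by (simp add: algebra_simps power2_eq_square)
    finally have "\<kappa> \<le> sv^2 + sw^2 * inverse \<rho>" using rho(2) by simp
    also have "sw^2 * inverse \<rho> \<le> sw^2 * mu" using invle rho by (simp add: mult_left_mono)
    finally show ?thesis unfolding \<kappa>_def by simp
  qed
qed

end


context absys begin

lemma zsa: "dim_vec h = dim_vec x \<Longrightarrow> (0::complex) \<cdot>\<^sub>v h + x = x"
  by (rule eq_vecI) auto

lemma low_bound: "sqrt (sw^2 * mu + sv^2) \<le> sigma_max (Pi 0)"
proof -
  define s0 where "s0 = \<i> * complex_of_real 0"
  have s00: "s0 = 0" unfolding s0_def by simp
  have s0: "Re s0 = 0" unfolding s0_def by simp
  define K0 where "K0 = K s0"
  have K0: "K0 \<in> carrier_mat p p" unfolding K0_def using K_props(1)[OF s0] .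
  define c where "c = sw^2 * mu + sv^2"
  have c0: "c \<ge> 0" unfolding c_def using mu_pos by simp
  obtain \<kappa> z where evz: "eigenvector (adj X * X) z \<kappa>" and muk: "mu = sqrt (Re \<kappa>)"
    using sm_attain[OF X_carrier mpos] unfolding mu_def by blast
  note ez = eig_AHA[OF X_carrier evz]
  have z: "z \<in> carrier_vec m" and z0: "z \<noteq> 0\<^sub>v m" using ez by auto
  have kap: "\<kappa> = of_real (mu * mu)" using ez(4,5) muk by (metis real_sqrt_mult_self real_sqrt_abs abs_of_nonneg real_sqrt_pow2 power2_eq_square)
  have XXz: "X *\<^sub>v (X *\<^sub>v z) = of_real (mu * mu) \<cdot>\<^sub>v z"
    using evz z unfolding eigenvector_def kap[symmetric] by (simp add: adj_X mv_assoc)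
  define e where "e = X *\<^sub>v z + complex_of_real mu \<cdot>\<^sub>v z"
  have e: "e \<in> carrier_vec m" unfolding e_def using z X_carrier
    by (metis add_carrier_vec mult_mat_vec_carrier smult_carrier_vec)
  have Xz: "X *\<^sub>v z \<in> carrier_vec m" by (rule mult_mat_vec_carrier[OF X_carrier z])
  have e0: "e \<noteq> 0\<^sub>v m"
  proof
    assume e0: "e = 0\<^sub>v m"
    have Xzm: "X *\<^sub>v z = (- complex_of_real mu) \<cdot>\<^sub>v z"
    proof (rule eq_vecI)
      fix i assume "i < dim_vec ((- complex_of_real mu) \<cdot>\<^sub>v z)"
      then have i: "i < m" using z by simp
      from arg_cong[OF e0, of "\<lambda>v. v $ i"] i z
      show "(X *\<^sub>v z) $ i = ((- complex_of_real mu) \<cdot>\<^sub>v z) $ i"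
        unfolding e_def by (simp add: eq_neg_iff_add_eq_0)
    qed (use z in simp)
    have "(X *\<^sub>v z) \<bullet>c z = (- complex_of_real mu) * (z \<bullet>c z)"
      unfolding Xzm using z by (simp add: cs_smult_left)
    moreover have "(X *\<^sub>v z) \<bullet>c z \<ge> 0" using X_psd[OF z] .
    moreover have "z \<bullet>c z > 0" using z z0 by simp
    ultimately show False using mu_pos
      by (auto simp: less_complex_def less_eq_complex_def mult_le_0_iff)
  qed
  have Xe: "X *\<^sub>v e = complex_of_real mu \<cdot>\<^sub>v e"
  proof -
    have "X *\<^sub>v e = X *\<^sub>v (X *\<^sub>v z) + complex_of_real mu \<cdot>\<^sub>v (X *\<^sub>v z)"
      unfolding e_def using z by (simp add: mv_vadd mv_svec)
    also have "\<dots> = complex_of_real mu \<cdot>\<^sub>v e"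
      unfolding XXz e_def
      by (rule eq_vecI) (use z in \<open>auto simp: algebra_simps\<close>)
    finally show ?thesis .
  qed
  define g where "g = complex_of_real (inverse mu) \<cdot>\<^sub>v (Y *\<^sub>v (V *\<^sub>v e))"
  have g: "g \<in> carrier_vec p" unfolding g_def using e V Y_props(1)
    by (metis mult_mat_vec_carrier smult_carrier_vec)
  have Vg: "adj V *\<^sub>v g = e"
  proof -
    have "adj V *\<^sub>v g = complex_of_real (inverse mu) \<cdot>\<^sub>v (X *\<^sub>v e)"
      unfolding g_def using e by (simp add: mv_svec X_mv)
    also have "\<dots> = e" unfolding Xe using mu_pos by (simp add: smult_smult_assoc)
    finally show ?thesis .
  qed
  have Ve: "V *\<^sub>v e = M *\<^sub>v g" unfolding Vg[symmetric] using VVv[OF g] .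
  define h where "h = adj K0 *\<^sub>v (M *\<^sub>v g)"
  have h: "h \<in> carrier_vec p" unfolding h_def using K0 M g by (metis adj_carrier mult_mat_vec_carrier)
  have "adj (As s0) *\<^sub>v h = M *\<^sub>v g" unfolding h_def K0_def using Kv(3)[OF s0 mult_mat_vec_carrier[OF M g]] .
  then have "cnj s0 \<cdot>\<^sub>v h + M *\<^sub>v (L *\<^sub>v h) = M *\<^sub>v g" unfolding adjAs_mv[OF h] .
  then have "M *\<^sub>v (L *\<^sub>v h) = M *\<^sub>v g" unfolding s00 using h by (simp add: zsa)
  then have "M *\<^sub>v (L *\<^sub>v h - g) = M *\<^sub>v g - M *\<^sub>v g" using h g by (simp add: mv_vminus)
  also have "\<dots> = 0\<^sub>v p" by (rule eq_vecI) auto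
  finally have "M *\<^sub>v (L *\<^sub>v h - g) = 0\<^sub>v p" .
  then have d0: "L *\<^sub>v h - g = 0\<^sub>v p" using M_inj[of "L *\<^sub>v h - g"] h g L
    by (metis minus_carrier_vec mult_mat_vec_carrier)
  have Lh: "L *\<^sub>v h = g"
  proof (rule eq_vecI)
    fix i assume "i < dim_vec g"
    then have i: "i < p" using g by simp
    from arg_cong[OF d0, of "\<lambda>v. v $ i"] i g show "(L *\<^sub>v h) $ i = g $ i" by simp
  qed (use g in simp)
  have As0: "As s0 *\<^sub>v x = L *\<^sub>v (M *\<^sub>v x)" if x: "x \<in> carrier_vec p" for x
    using As_mv[OF x, of s0] x unfolding s00 by (simp add: zsa)
  have K0LMg: "K0 *\<^sub>v (L *\<^sub>v (M *\<^sub>v g)) = g" using Kv(2)[OF s0 g] As0[OF g] unfolding K0_def by simp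
  have YMg: "Y *\<^sub>v (M *\<^sub>v g) = K0 *\<^sub>v g"
  proof -
    have K0g: "K0 *\<^sub>v g \<in> carrier_vec p" using K0 g by (rule mult_mat_vec_carrier)
    have "T *\<^sub>v (K0 *\<^sub>v g) = M *\<^sub>v (As s0 *\<^sub>v (K0 *\<^sub>v g))" using T_mv[OF K0g] As0[OF K0g] by simp
    also have "\<dots> = M *\<^sub>v g" using Kv(1)[OF s0 g] unfolding K0_def by simp
    finally have "Y *\<^sub>v (T *\<^sub>v (K0 *\<^sub>v g)) = Y *\<^sub>v (M *\<^sub>v g)" by simp
    then show ?thesis using Yv(2)[OF K0g] by simp
  qed
  have VK0g: "adj V *\<^sub>v (K0 *\<^sub>v g) = complex_of_real mu \<cdot>\<^sub>v e"
    using Xe[symmetric] e unfolding X_mv[OF e] Ve YMg by simp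
  define w where "w = adj (Pi 0) *\<^sub>v e"
  have w: "w \<in> carrier_vec q" unfolding w_def using e by (metis Pi_carrier adj_carrier mult_mat_vec_carrier)
  have w_eq: "w = adj B *\<^sub>v h"
    unfolding w_def adjPi_mv[OF e] Ve h_def K0_def s0_def ..
  have PPe: "Pi 0 *\<^sub>v w = complex_of_real c \<cdot>\<^sub>v e"
  proof -
    have "Pi 0 *\<^sub>v w = adj V *\<^sub>v (K0 *\<^sub>v (B *\<^sub>v (adj B *\<^sub>v h)))"
      unfolding w_eq K0_def s0_def using Pi_mv[of "adj B *\<^sub>v h"] h B by (metis adj_carrier mult_mat_vec_carrier)
    also have "B *\<^sub>v (adj B *\<^sub>v h) = complex_of_real (sw^2) \<cdot>\<^sub>v g + complex_of_real (sv^2) \<cdot>\<^sub>v (L *\<^sub>v (M *\<^sub>v g))"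
      using BBv[OF h] unfolding Lh .
    also have "K0 *\<^sub>v \<dots> = complex_of_real (sw^2) \<cdot>\<^sub>v (K0 *\<^sub>v g) + complex_of_real (sv^2) \<cdot>\<^sub>v g"
      using g K0 L M by (simp add: mv_vadd mv_svec K0LMg)
    also have "adj V *\<^sub>v \<dots> = complex_of_real (sw^2) \<cdot>\<^sub>v (complex_of_real mu \<cdot>\<^sub>v e) + complex_of_real (sv^2) \<cdot>\<^sub>v e"
      using g K0 V by (simp add: mv_vadd mv_svec VK0g Vg)
    also have "\<dots> = complex_of_real c \<cdot>\<^sub>v e"
      unfolding c_def by (rule eq_vecI) (use e in \<open>auto simp: algebra_simps\<close>)
    finally show ?thesis .
  qed
  show ?thesis
  proof (cases "c = 0")
    case True
    then show ?thesis using sm_nonneg[OF Pi_carrier q] unfolding c_def by simp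
  next
    case False
    have cc: "complex_of_real c \<noteq> 0" using False by simp
    have w0: "w \<noteq> 0\<^sub>v q"
    proof
      assume "w = 0\<^sub>v q"
      then have "Pi 0 *\<^sub>v w = 0\<^sub>v m" by (intro eq_vecI) (auto simp: scalar_prod_def)
      then have "complex_of_real c \<cdot>\<^sub>v e = 0\<^sub>v m" using PPe by simp
      then show False using smult_zero_vec[OF cc e] e0 by simp
    qed
    have "(adj (Pi 0) * Pi 0) *\<^sub>v w = adj (Pi 0) *\<^sub>v (Pi 0 *\<^sub>v w)" using w by (simp add: mv_assoc)
    also have "\<dots> = adj (Pi 0) *\<^sub>v (complex_of_real c \<cdot>\<^sub>v e)" by (simp only: PPe)
    also have "\<dots> = complex_of_real c \<cdot>\<^sub>v w" unfolding w_def using e by (simp add: mv_svec)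
    finally have "eigenvector (adj (Pi 0) * Pi 0) w (complex_of_real c)"
      unfolding eigenvector_def using w w0 by simp
    then have "sqrt (Re (complex_of_real c)) \<le> sigma_max (Pi 0)"
      by (intro sm_ge[OF Pi_carrier q]) (auto simp: eigenvalue_def)
    then show ?thesis unfolding c_def by simp
  qed
qed

lemma main_abs: "(SUP \<omega>::real. sigma_max (Pi \<omega>))^2 = sw^2 * mu + sv^2"
proof -
  define c where "c = sw^2 * mu + sv^2"
  have c0: "c \<ge> 0" unfolding c_def using mu_pos by simp
  have le: "sigma_max (Pi \<omega>) \<le> sqrt c" for \<omega>
    unfolding c_def by (rule sm_le[OF Pi_carrier q]) (rule up_bound)
  have eq0: "sigma_max (Pi 0) = sqrt c" using le[of 0] low_bound unfolding c_def by simp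
  have "(SUP \<omega>::real. sigma_max (Pi \<omega>)) = sqrt c"
    by (rule cSup_eq_maximum) (use le eq0 in \<open>auto intro: range_eqI[of _ _ 0]\<close>)
  then show ?thesis using c0 unfolding c_def by simp
qed

end


lemma massoc: "dim_col (A::'a::semiring_0 mat) = dim_row B \<Longrightarrow> dim_col B = dim_row C \<Longrightarrow> A * B * C = A * (B * C)"
  by (intro assoc_mult_mat carrier_matI) auto

lemma cmat_mult': "dim_col A = dim_row B \<Longrightarrow> cmat (A * B) = cmat A * cmat B"
  by (intro cmat_mult carrier_matI) auto

lemma tr_mult': "dim_col (A::'a::comm_semiring_0 mat) = dim_row B \<Longrightarrow> transpose_mat (A * B) = transpose_mat B * transpose_mat A"
  by (intro transpose_mult carrier_matI) auto

lemma tr_dg: "transpose_mat (mat_diag k f) = mat_diag k f"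
  by (rule eq_matI) (auto simp: mat_diag_def)

lemma dg_cong: "(\<And>i. i < k \<Longrightarrow> f i = g i) \<Longrightarrow> mat_diag k f = mat_diag k g"
  unfolding mat_diag_def by (rule eq_matI) auto

lemma dg_dims[simp]: "dim_row (mat_diag k f) = k" "dim_col (mat_diag k f) = k"
  unfolding mat_diag_def by auto

lemma cmat_one: "cmat (1\<^sub>m k) = 1\<^sub>m k" by (rule eq_matI) auto

lemma cmat_mv_index: "i < dim_row A \<Longrightarrow> dim_vec x = dim_col A \<Longrightarrow>
   (cmat A *\<^sub>v x) $ i = (\<Sum>j<dim_col A. complex_of_real (A $$ (i,j)) * x $ j)"
  by (simp add: scalar_prod_def lessThan_atLeast0)

lemma smult_tr: "dim_col A = dim_col B \<Longrightarrow> ((a::real) \<cdot>\<^sub>m A) * transpose_mat (b \<cdot>\<^sub>m B) = (a * b) \<cdot>\<^sub>m (A * transpose_mat B)"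
  by (rule eq_matI) (auto simp: scalar_prod_def sum_distrib_left mult_ac)

lemma pd_gram: assumes G: "G \<in> carrier_mat r c" and x: "x \<in> carrier_vec c" and nz: "G *\<^sub>v x \<noteq> 0\<^sub>v r"
  shows "((adj G * G) *\<^sub>v x) \<bullet>c x > 0"
proof -
  have "(adj G * G) *\<^sub>v x = adj G *\<^sub>v (G *\<^sub>v x)" using G x by (simp add: mv_assoc)
  moreover have "(adj G *\<^sub>v (G *\<^sub>v x)) \<bullet>c x = (G *\<^sub>v x) \<bullet>c (G *\<^sub>v x)"
    using cscalar_adj[of "adj G" c r "G *\<^sub>v x" x] G x by simp
  moreover have "(G *\<^sub>v x) \<bullet>c (G *\<^sub>v x) > 0" using nz G x
    by (metis conjugate_square_greater_0_vec mult_mat_vec_carrier)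
  ultimately show ?thesis by simp
qed

lemma inv_det_real: assumes A: "(A::real mat) \<in> carrier_mat k k" and d: "det A \<noteq> 0"
  shows "minv A \<in> carrier_mat k k" "A * minv A = 1\<^sub>m k" "minv A * A = 1\<^sub>m k"
proof -
  have U: "A \<in> Units (ring_mat TYPE(real) k ())" by (rule det_non_zero_imp_unit[OF A d])
  have "mat_inverse A \<noteq> None" using mat_inverse(1)[OF A, where b="()"] U by auto
  then obtain Bi where Bi: "mat_inverse A = Some Bi" by auto
  from mat_inverse(2)[OF A Bi] have "A * Bi = 1\<^sub>m k \<and> Bi * A = 1\<^sub>m k \<and> Bi \<in> carrier_mat k k" .
  moreover have "minv A = Bi" unfolding minv_def Bi by simp
  ultimately show "minv A \<in> carrier_mat k k" "A * minv A = 1\<^sub>m k" "minv A * A = 1\<^sub>m k" by auto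
qed

lemma cmat_minv: assumes A: "A \<in> carrier_mat k k"
  and ker: "\<And>x. x \<in> carrier_vec k \<Longrightarrow> cmat A *\<^sub>v x = 0\<^sub>v k \<Longrightarrow> x = 0\<^sub>v k"
  shows "minv (cmat A) = cmat (minv A)" "minv A \<in> carrier_mat k k"
proof -
  have cA: "cmat A \<in> carrier_mat k k" using A by simp
  have "det (cmat A) \<noteq> 0" using det_0_iff_vec_prod_zero[OF cA] ker by auto
  moreover have "det (cmat A) = complex_of_real (det A)" unfolding cmat_def by (rule of_real_hom.hom_det)
  ultimately have d: "det A \<noteq> 0" by simp
  note R = inv_det_real[OF A d]
  show "minv A \<in> carrier_mat k k" using R by simp
  note C = inv_ker[OF cA ker]
  have one: "cmat A * cmat (minv A) = 1\<^sub>m k" using cmat_mult[OF A R(1)] R(2) cmat_one by simp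
  have "minv (cmat A) = minv (cmat A) * (cmat A * cmat (minv A))" using one C(1) by simp
  also have "\<dots> = (minv (cmat A) * cmat A) * cmat (minv A)"
    using assoc_mult_mat[OF C(1) cA cmat_carrier[OF R(1)]] by simp
  also have "\<dots> = cmat (minv A)" using C(3) R(1) by simp
  finally show "minv (cmat A) = cmat (minv A)" .
qed

lemma blk: assumes A: "(A::real mat) \<in> carrier_mat r a" and C: "C \<in> carrier_mat r c"
  shows "mat r (a + c) (\<lambda>(i,j). if j < a then A $$ (i,j) else C $$ (i, j - a)) *
         transpose_mat (mat r (a + c) (\<lambda>(i,j). if j < a then A $$ (i,j) else C $$ (i, j - a)))
       = A * transpose_mat A + C * transpose_mat C" (is "?B * transpose_mat ?B = _")
proof (rule eq_matI)
  fix i j assume i: "i < dim_row (A * transpose_mat A + C * transpose_mat C)"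
    and j: "j < dim_col (A * transpose_mat A + C * transpose_mat C)"
  then have ir: "i < r" and jr: "j < r" using A C by auto
  define f where "f k = ?B $$ (i,k) * ?B $$ (j,k)" for k
  have "(?B * transpose_mat ?B) $$ (i,j) = (\<Sum>k\<in>{0..<a+c}. f k)"
    using ir jr by (simp add: scalar_prod_def f_def)
  also have "\<dots> = (\<Sum>k\<in>{0..<a}. f k) + (\<Sum>k\<in>{a..<a+c}. f k)"
    by (rule sum.atLeastLessThan_concat[symmetric]) auto
  also have "(\<Sum>k\<in>{a..<a+c}. f k) = (\<Sum>k\<in>{0..<c}. f (k + a))"
    using sum.shift_bounds_nat_ivl[of f 0 a c] by (simp add: add.commute)
  also have "(\<Sum>k\<in>{0..<a}. f k) = (A * transpose_mat A) $$ (i,j)"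
    using ir jr A by (auto simp: scalar_prod_def f_def intro!: sum.cong)
  also have "(\<Sum>k\<in>{0..<c}. f (k + a)) = (C * transpose_mat C) $$ (i,j)"
    using ir jr C by (auto simp: scalar_prod_def f_def intro!: sum.cong)
  finally show "(?B * transpose_mat ?B) $$ (i,j) = (A * transpose_mat A + C * transpose_mat C) $$ (i,j)"
    using ir jr A C by simp
qed (use A C in auto)

lemma D_tau_index:
  assumes "i < n" "l < n - 1" "n - 1 \<le> length es"
  shows "D_tau n es $$ (i,l) = (if i = fst (es!l) then 1 else if i = snd (es!l) then -1 else 0)"
  using assms unfolding D_tau_def incidence_def by auto

lemma graph_inj:
  fixes x :: "nat \<Rightarrow> complex"
  assumes sg: "simple_graph_edges n es" and st: "first_edges_spanning_tree n es"
  and H: "\<And>i. i < n \<Longrightarrow> (\<Sum>l'<n-1. complex_of_real (D_tau n es $$ (i,l')) * x l') = 0"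
  and l: "l < n - 1"
  shows "x l = 0"
proof -
  define p where "p = n - 1"
  have plen: "p \<le> length es" using st unfolding first_edges_spanning_tree_def p_def by auto
  define F where "F = take p es"
  have lenF: "length F = p" unfolding F_def using plen by simp
  have Fnth: "F ! j = es ! j" if "j < p" for j unfolding F_def using that by simp
  define G where "G = take l F @ drop (Suc l) F"
  define a where "a = fst (es ! l)"
  define b where "b = snd (es ! l)"
  have endp: "fst (es!j) < n \<and> snd (es!j) < n \<and> fst (es!j) \<noteq> snd (es!j)" if "j < p" for j
  proof -
    have "es ! j \<in> set es" using that plen by simp
    moreover obtain a' b' where eq: "es ! j = (a', b')" by (cases "es ! j")
    ultimately have "(a', b') \<in> set es" by simp
    then have "a' < n \<and> b' < n \<and> a' \<noteq> b'" using sg unfolding simple_graph_edges_def by fast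
    then show ?thesis using eq by simp
  qed
  define S where "S = {i. i < n \<and> (adj_rel G)\<^sup>*\<^sup>* a i}"
  have Ssub: "S \<subseteq> {..<n}" unfolding S_def by auto
  have finS: "finite S" using Ssub finite_subset by blast
  have aS: "a \<in> S" unfolding S_def a_def using endp[OF l[folded p_def]] by auto
  have bS: "b \<notin> S"
  proof
    assume "b \<in> S"
    then have "(adj_rel G)\<^sup>*\<^sup>* a b" unfolding S_def by auto
    moreover have "\<not> (adj_rel G)\<^sup>*\<^sup>* (fst (F!l)) (snd (F!l))"
      using st lenF l unfolding first_edges_spanning_tree_def acyclic_edges_def G_def F_def p_def
      by auto
    ultimately show False unfolding a_def b_def using Fnth l p_def by simp
  qed
  have inG: "es ! j \<in> set G" if "j < p" "j \<noteq> l" for j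
  proof (cases "j < l")
    case True
    then have "take l F ! j = F ! j" by simp
    moreover have "j < length (take l F)" using True lenF l p_def by simp
    ultimately show ?thesis unfolding G_def using Fnth[OF that(1)] by (metis UnCI nth_mem set_append)
  next
    case False
    then have jl: "j > l" using that by simp
    have "drop (Suc l) F ! (j - Suc l) = F ! j" using jl lenF that by simp
    moreover have "j - Suc l < length (drop (Suc l) F)" using jl lenF that by simp
    ultimately show ?thesis unfolding G_def using Fnth[OF that(1)] by (metis UnCI nth_mem set_append)
  qed
  have closed: "fst (es!j) \<in> S \<longleftrightarrow> snd (es!j) \<in> S" if "j < p" "j \<noteq> l" for j
  proof -
    have adj1: "adj_rel G (fst (es!j)) (snd (es!j))" and adj2: "adj_rel G (snd (es!j)) (fst (es!j))"
      unfolding adj_rel_def by (intro bexI[OF _ inG[OF that]], simp split: prod.split)+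
    show ?thesis using endp[OF that(1)] unfolding S_def
      using rtranclp.rtrancl_into_rtrancl[of "adj_rel G" a _ _, OF _ adj1]
            rtranclp.rtrancl_into_rtrancl[of "adj_rel G" a _ _, OF _ adj2] by auto
  qed
  define c where "c j = (\<Sum>i\<in>S. complex_of_real (D_tau n es $$ (i,j)))" for j
  have c_eq: "c j = (if fst (es!j) \<in> S then 1 else 0) - (if snd (es!j) \<in> S then 1 else 0)" if "j < p" for j
  proof -
    have "c j = (\<Sum>i\<in>S. (if i = fst (es!j) then 1 else 0) - (if i = snd (es!j) then 1 else 0))"
      unfolding c_def
    proof (rule sum.cong[OF refl])
      fix i assume "i \<in> S"
      then have "i < n" using Ssub by auto
      then show "complex_of_real (D_tau n es $$ (i,j)) = (if i = fst (es!j) then 1 else 0) - (if i = snd (es!j) then 1 else 0)"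
        using D_tau_index[of i n j es] that plen endp[OF that] unfolding p_def by auto
    qed
    also have "\<dots> = (if fst (es!j) \<in> S then 1 else 0) - (if snd (es!j) \<in> S then 1 else 0)"
      using finS by (simp add: sum_subtractf)
    finally show ?thesis .
  qed
  have c_l: "c l = 1" using c_eq[OF l[folded p_def]] aS bS unfolding a_def b_def by simp
  have c_j: "c j = 0" if "j < p" "j \<noteq> l" for j using c_eq[OF that(1)] closed[OF that] by simp
  have "0 = (\<Sum>i\<in>S. \<Sum>l'<p. complex_of_real (D_tau n es $$ (i,l')) * x l')"
    using H Ssub unfolding p_def by (intro sum.neutral[symmetric]) auto
  also have "\<dots> = (\<Sum>l'<p. c l' * x l')"
    unfolding c_def by (simp add: sum.swap[of _ S] sum_distrib_right)
  also have "\<dots> = (\<Sum>l'<p. if l' = l then x l else 0)"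
    by (rule sum.cong[OF refl]) (auto simp: c_l c_j)
  also have "\<dots> = x l" using l p_def by simp
  finally show ?thesis by simp
qed



context
  fixes n :: nat and es :: "(nat \<times> nat) list" and w eps :: "nat \<Rightarrow> real" and sw sv :: real
  assumes n2: "n \<ge> 2" and sg: "simple_graph_edges n es" and st: "first_edges_spanning_tree n es"
    and wpos: "\<forall>l < length es. w l > 0" and epos: "\<forall>i < n. eps i > 0"
begin

abbreviation "pp \<equiv> n - 1"
abbreviation "mm \<equiv> length es"
abbreviation "Dr \<equiv> D_tau n es"
abbreviation "Rr \<equiv> Rmat n es"
abbreviation "Lr \<equiv> L_es n es eps"
abbreviation "Wh \<equiv> mat_diag mm (\<lambda>l. sqrt (w l))"
abbreviation "Wr \<equiv> mat_diag mm w"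
abbreviation "Eh \<equiv> mat_diag n (\<lambda>i. 1 / sqrt (eps i))"
abbreviation "Ei \<equiv> mat_diag n (\<lambda>i. 1 / eps i)"
abbreviation "Mr \<equiv> Rr * Wr * transpose_mat Rr"

lemma plen: "pp \<le> mm" using st unfolding first_edges_spanning_tree_def by auto
lemma ppos: "pp > 0" using n2 by simp
lemma mpos': "mm > 0" using plen ppos by linarith

lemma dimsI[simp]: "dim_row Dr = n" "dim_col Dr = pp" "dim_row Rr = pp" "dim_col Rr = mm"
  "dim_row Lr = pp" "dim_col Lr = pp"
  unfolding D_tau_def Rmat_def L_es_def by auto

lemma EhEh: "Eh * Eh = Ei"
  by (simp, rule dg_cong) (use epos in \<open>auto simp: field_simps\<close>)
lemma WhWh: "Wh * Wh = Wr"
  by (simp, rule dg_cong) (use wpos in auto)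
lemma EhEh': "dim_row A = n \<Longrightarrow> Eh * (Eh * A) = Ei * A"
  using massoc[of Eh Eh A] EhEh by simp
lemma WhWh': "dim_row A = mm \<Longrightarrow> Wh * (Wh * A) = Wr * A"
  using massoc[of Wh Wh A] WhWh by simp

lemma Lr_nf: "Lr = transpose_mat Dr * (Ei * Dr)"
  unfolding L_es_def by (simp add: massoc)
lemma Lr_sym: "transpose_mat Lr = Lr"
  unfolding Lr_nf by (simp add: tr_mult' tr_dg massoc)
lemma Lr_fact: "Lr = transpose_mat (Eh * Dr) * (Eh * Dr)"
  unfolding Lr_nf by (simp add: tr_mult' tr_dg massoc EhEh')
lemma Mr_sym: "transpose_mat Mr = Mr"
  by (simp add: tr_mult' tr_dg massoc)
lemma Mr_fact: "Mr = transpose_mat (Wh * transpose_mat Rr) * (Wh * transpose_mat Rr)"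
  by (simp add: tr_mult' tr_dg massoc WhWh')

definition G1 where "G1 = cmat (Eh * Dr)"
definition G2 where "G2 = cmat (Wh * transpose_mat Rr)"
definition Lc where "Lc = cmat Lr"
definition Mc where "Mc = cmat Mr"
definition Vc where "Vc = adj G2"
definition Bc where "Bc = cmat (B_blk n es w eps sw sv)"

lemma G1_carrier: "G1 \<in> carrier_mat n pp" unfolding G1_def by (rule carrier_matI) auto
lemma G2_carrier: "G2 \<in> carrier_mat mm pp" unfolding G2_def by (rule carrier_matI) auto

lemma Lc_gram: "Lc = adj G1 * G1"
  unfolding Lc_def G1_def adj_cmat by (subst cmat_mult'[symmetric]) (auto simp: Lr_fact[symmetric])
lemma Mc_gram: "Mc = adj G2 * G2"
  unfolding Mc_def G2_def adj_cmat by (subst cmat_mult'[symmetric]) (auto simp: Mr_fact[symmetric])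

lemma G1_inj: assumes x: "x \<in> carrier_vec pp" and z: "G1 *\<^sub>v x = 0\<^sub>v n" shows "x = 0\<^sub>v pp"
proof (rule eq_vecI)
  have EhD: "Eh * Dr = mat n pp (\<lambda>(i,j). (1 / sqrt (eps i)) * Dr $$ (i,j))"
    by (rule mat_diag_mult_left) (rule carrier_matI, auto)
  have H: "(\<Sum>l'<n-1. complex_of_real (Dr $$ (i,l')) * vec_index x l') = 0" if i: "i < n" for i
  proof -
    have "(G1 *\<^sub>v x) $ i = 0" using z i by simp
    moreover have "(G1 *\<^sub>v x) $ i = (\<Sum>j<pp. complex_of_real ((Eh * Dr) $$ (i,j)) * x $ j)"
      unfolding G1_def using i x by (subst cmat_mv_index) auto
    moreover have "\<dots> = complex_of_real (1 / sqrt (eps i)) * (\<Sum>j<pp. complex_of_real (Dr $$ (i,j)) * x $ j)"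
      unfolding EhD using i by (simp add: sum_distrib_left mult_ac)
    moreover have "eps i > 0" using epos i by blast
    then have "1 / sqrt (eps i) \<noteq> 0" by simp
    ultimately show ?thesis by simp
  qed
  fix l assume "l < dim_vec (0\<^sub>v pp)"
  then have l: "l < n - 1" by simp
  show "x $ l = 0\<^sub>v pp $ l" using graph_inj[OF sg st H l] l by simp
qed (use x in simp)

lemma Rr_index: "j < pp \<Longrightarrow> l < pp \<Longrightarrow> Rr $$ (j,l) = (if j = l then 1 else 0)"
  unfolding Rmat_def using plen by auto

lemma G2_inj: assumes x: "x \<in> carrier_vec pp" and z: "G2 *\<^sub>v x = 0\<^sub>v mm" shows "x = 0\<^sub>v pp"
proof (rule eq_vecI)
  have WR: "Wh * transpose_mat Rr = mat mm pp (\<lambda>(i,j). sqrt (w i) * transpose_mat Rr $$ (i,j))"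
    by (rule mat_diag_mult_left) (rule carrier_matI, auto)
  fix l assume "l < dim_vec (0\<^sub>v pp)"
  then have l: "l < pp" by simp
  then have lm: "l < mm" using plen by simp
  have "(G2 *\<^sub>v x) $ l = 0" using z lm by simp
  moreover have "(G2 *\<^sub>v x) $ l = (\<Sum>j<pp. complex_of_real ((Wh * transpose_mat Rr) $$ (l,j)) * x $ j)"
    unfolding G2_def using lm x by (subst cmat_mv_index) auto
  moreover have "\<dots> = (\<Sum>j<pp. if j = l then complex_of_real (sqrt (w l)) * x $ j else 0)"
    unfolding WR using lm l by (intro sum.cong) (auto simp: Rr_index)
  moreover have "\<dots> = complex_of_real (sqrt (w l)) * x $ l" using l by simp
  moreover have "w l > 0" using wpos lm by blast
  then have "sqrt (w l) \<noteq> 0" by simp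
  ultimately show "x $ l = 0\<^sub>v pp $ l" using l by simp
qed (use x in simp)


lemma Lc_herm: "adj Lc = Lc" unfolding Lc_def adj_cmat Lr_sym ..
lemma Mc_herm: "adj Mc = Mc" unfolding Mc_def adj_cmat Mr_sym ..
lemma Lc_carrier: "Lc \<in> carrier_mat pp pp" unfolding Lc_def by (rule carrier_matI) auto
lemma Mc_carrier: "Mc \<in> carrier_mat pp pp" unfolding Mc_def by (rule carrier_matI) auto
lemma Vc_carrier: "Vc \<in> carrier_mat pp mm" unfolding Vc_def using G2_carrier by simp
lemma Bb_dims[simp]: "dim_row (B_blk n es w eps sw sv) = pp" "dim_col (B_blk n es w eps sw sv) = n + mm"
  unfolding B_blk_def Let_def by auto
lemma Bc_carrier: "Bc \<in> carrier_mat pp (n + mm)" unfolding Bc_def by (rule carrier_matI) auto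

lemma Lpd: "x \<in> carrier_vec pp \<Longrightarrow> x \<noteq> 0\<^sub>v pp \<Longrightarrow> (Lc *\<^sub>v x) \<bullet>c x > 0"
  unfolding Lc_gram using G1_inj by (intro pd_gram[OF G1_carrier]) auto
lemma Mpd: "x \<in> carrier_vec pp \<Longrightarrow> x \<noteq> 0\<^sub>v pp \<Longrightarrow> (Mc *\<^sub>v x) \<bullet>c x > 0"
  unfolding Mc_gram using G2_inj by (intro pd_gram[OF G2_carrier]) auto
lemma VV: "Vc * adj Vc = Mc" unfolding Vc_def Mc_gram by simp

lemma Bblk: "B_blk n es w eps sw sv * transpose_mat (B_blk n es w eps sw sv)
   = (sw^2) \<cdot>\<^sub>m Lr + (sv^2) \<cdot>\<^sub>m (Lr * Mr * Lr)"
proof -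
  define X1 where "X1 = transpose_mat Dr * Eh"
  define X2 where "X2 = Lr * Rr * Wh"
  have X1: "sw \<cdot>\<^sub>m X1 \<in> carrier_mat pp n" unfolding X1_def by (rule carrier_matI) auto
  have X2: "(- sv) \<cdot>\<^sub>m X2 \<in> carrier_mat pp mm" unfolding X2_def by (rule carrier_matI) auto
  have "B_blk n es w eps sw sv = mat pp (n + mm) (\<lambda>(i,j). if j < n then (sw \<cdot>\<^sub>m X1) $$ (i,j) else ((- sv) \<cdot>\<^sub>m X2) $$ (i, j - n))"
    unfolding B_blk_def Let_def X1_def X2_def ..
  then have "B_blk n es w eps sw sv * transpose_mat (B_blk n es w eps sw sv)
     = (sw \<cdot>\<^sub>m X1) * transpose_mat (sw \<cdot>\<^sub>m X1) + ((- sv) \<cdot>\<^sub>m X2) * transpose_mat ((- sv) \<cdot>\<^sub>m X2)"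
    using blk[OF X1 X2] by simp
  also have "(sw \<cdot>\<^sub>m X1) * transpose_mat (sw \<cdot>\<^sub>m X1) = (sw * sw) \<cdot>\<^sub>m (X1 * transpose_mat X1)"
    by (rule smult_tr) simp
  also have "X1 * transpose_mat X1 = Lr"
    unfolding X1_def Lr_nf by (simp add: tr_mult' tr_dg massoc EhEh')
  also have "((- sv) \<cdot>\<^sub>m X2) * transpose_mat ((- sv) \<cdot>\<^sub>m X2) = ((-sv) * (-sv)) \<cdot>\<^sub>m (X2 * transpose_mat X2)"
    by (rule smult_tr) simp
  also have "X2 * transpose_mat X2 = Lr * Mr * Lr"
    unfolding X2_def by (simp add: tr_mult' tr_dg massoc WhWh' Lr_sym)
  finally show ?thesis by (simp add: power2_eq_square)
qed

lemma BB: "Bc * adj Bc = complex_of_real (sw^2) \<cdot>\<^sub>m Lc + complex_of_real (sv^2) \<cdot>\<^sub>m (Lc * Mc * Lc)"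
proof -
  have "Bc * adj Bc = cmat (B_blk n es w eps sw sv * transpose_mat (B_blk n es w eps sw sv))"
    unfolding Bc_def adj_cmat by (subst cmat_mult') auto
  also have "\<dots> = cmat ((sw^2) \<cdot>\<^sub>m Lr) + cmat ((sv^2) \<cdot>\<^sub>m (Lr * Mr * Lr))"
    unfolding Bblk by (rule cmat_add[of _ pp pp]) (auto intro!: carrier_matI)
  also have "cmat (Lr * Mr * Lr) = Lc * Mc * Lc"
    unfolding Lc_def Mc_def by (simp add: cmat_mult')
  then have "cmat ((sw^2) \<cdot>\<^sub>m Lr) + cmat ((sv^2) \<cdot>\<^sub>m (Lr * Mr * Lr))
     = complex_of_real (sw^2) \<cdot>\<^sub>m Lc + complex_of_real (sv^2) \<cdot>\<^sub>m (Lc * Mc * Lc)"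
    unfolding cmat_smult Lc_def by simp
  finally show ?thesis .
qed

lemma absys_inst: "absys pp mm (n + mm) Lc Mc Vc Bc sw sv"
  by (unfold_locales) (use ppos mpos' Lc_carrier Mc_carrier Vc_carrier Bc_carrier Lc_herm Mc_herm Lpd Mpd VV BB in auto)


interpretation A: absys pp mm "n + mm" Lc Mc Vc Bc sw sv by (rule absys_inst)

lemma Pi_eq: "Pi_tau n es w eps sw sv (\<i> * complex_of_real \<omega>) = A.Pi \<omega>"
proof -
  define s where "s = \<i> * complex_of_real \<omega>"
  have s: "Re s = 0" unfolding s_def by simp
  have LM: "cmat (Lr * Rr * Wr * transpose_mat Rr) = Lc * Mc"
  proof -
    have "Lr * Rr * Wr * transpose_mat Rr = Lr * Mr" by (simp add: massoc)
    then show ?thesis unfolding Lc_def Mc_def by (simp add: cmat_mult')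
  qed
  define Kk where "Kk = A.K s"
  have Kk: "Kk \<in> carrier_mat pp pp" unfolding Kk_def using A.K_props(1)[OF s] .
  have Kdef: "minv (s \<cdot>\<^sub>m 1\<^sub>m pp + cmat (Lr * Rr * Wr * transpose_mat Rr)) = Kk"
    unfolding Kk_def A.K_def A.As_def LM ..
  have G2: "adj Vc = cmat Wh * cmat (transpose_mat Rr)" unfolding Vc_def G2_def by (simp add: cmat_mult')
  have "Pi_tau n es w eps sw sv s = cmat Wh * (cmat (transpose_mat Rr) * Kk * Bc)"
    unfolding Pi_tau_def Sigma_tau_def Kdef Bc_def ..
  also have "\<dots> = adj Vc * Kk * Bc" unfolding G2 using Kk Bc_carrier
    by (simp add: massoc carrier_matD)
  also have "\<dots> = A.Pi \<omega>" unfolding A.Pi_def Kk_def s_def ..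
  finally show ?thesis unfolding s_def .
qed

lemma X_eq: "cmat (X_mat n es w eps) = A.X"
proof -
  define Tr where "Tr = Rr * Wr * transpose_mat Rr * Lr * Rr * Wr * transpose_mat Rr"
  have Tr: "Tr \<in> carrier_mat pp pp" unfolding Tr_def by (rule carrier_matI) auto
  have cT: "cmat Tr = A.T"
  proof -
    have "Tr = Mr * Lr * Mr" unfolding Tr_def by (simp add: massoc)
    then have "cmat Tr = Mc * Lc * Mc" unfolding Mc_def Lc_def by (simp add: cmat_mult')
    then show ?thesis by (simp add: A.T_def)
  qed
  have ker: "x = 0\<^sub>v pp" if "x \<in> carrier_vec pp" "cmat Tr *\<^sub>v x = 0\<^sub>v pp" for x
    using A.T_ker that unfolding cT by blast
  note cm = cmat_minv[OF Tr ker]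
  define Yr where "Yr = minv Tr"
  have Yr: "Yr \<in> carrier_mat pp pp" unfolding Yr_def using cm(2) .
  have Y: "A.Y = cmat Yr" unfolding A.Y_def Yr_def cT[symmetric] using cm(1) .
  have "X_mat n es w eps = Wh * transpose_mat Rr * Yr * Rr * Wh"
    unfolding X_mat_def Let_def Yr_def Tr_def ..
  also have "\<dots> = (Wh * transpose_mat Rr) * Yr * (Rr * Wh)" using Yr by (simp add: massoc carrier_matD)
  finally have XR: "X_mat n es w eps = (Wh * transpose_mat Rr) * Yr * (Rr * Wh)" .
  have "cmat (X_mat n es w eps) = cmat (Wh * transpose_mat Rr) * cmat Yr * cmat (Rr * Wh)"
    unfolding XR using Yr by (simp add: cmat_mult' carrier_matD)
  also have "cmat (Rr * Wh) = Vc" unfolding Vc_def G2_def adj_cmat by (simp add: tr_mult' tr_dg)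
  also have "cmat (Wh * transpose_mat Rr) = adj Vc" unfolding Vc_def G2_def by simp
  finally show ?thesis unfolding A.X_def Y .
qed

lemma main_inst: "(hinf_norm (Pi_tau n es w eps sw sv))\<^sup>2
           = sw\<^sup>2 * sigma_max (cmat (X_mat n es w eps)) + sv\<^sup>2"
  unfolding hinf_norm_def Pi_eq X_eq A.mu_def[symmetric] using A.main_abs .

end

theorem theorem2:
  fixes n :: nat and es :: "(nat \<times> nat) list"
    and w eps :: "nat \<Rightarrow> real" and sw sv :: real
  assumes "n \<ge> 2"
    and "simple_graph_edges n es"
    and "first_edges_spanning_tree n es"
    and "\<forall>l < length es. w l > 0"
    and "\<forall>i < n. eps i > 0"
  shows "(hinf_norm (Pi_tau n es w eps sw sv))\<^sup>2
           = sw\<^sup>2 * sigma_max (cmat (X_mat n es w eps)) + sv\<^sup>2"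
  by (rule main_inst[OF assms])


end
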